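(* Let $L$ and $M$ be finite-dimensional stem Lie superalgebras that are isoclinic. Then there exists a factor set $r$ on $L$ such that $M\cong (Z(L),L/Z(L),r)$.
   Context: Lie superalgebras over a field of characteristic $\neq 2,3$: $\mathbb{Z}_2$-graded algebras with graded skew-symmetric bracket satisfying the graded Jacobi identity; homomorphisms are even. $Z(L)$ is the center, $L'=[L,L]$; $L$ is stem if $Z(L)\subseteq L'$. $L,M$ are isoclinic if there are isomorphisms $\varphi:L/Z(L)\to M/Z(M)$, $\theta:L'\to M'$ with $\theta([l,m])=[k,r]$ whenever $k+Z(M)=\varphi(l+Z(L))$, $r+Z(M)=\varphi(m+Z(L))$. A factor set on $L$ is a bilinear map $r:L/Z(L)\times L/Z(L)\to Z(L)$ with, for homogeneous $\bar a,\bar b,\bar c$: $r(\bar a,\bar b)\in Z(L)_{|\bar a|+|\bar b|}$; $r(\bar a,\bar b)=-(-1)^{|\bar a||\bar b|}r(\bar b,\bar a)$; $r([\bar a,\bar b],\bar c)=r(\bar a,[\bar b,\bar c])-(-1)^{|\bar a||\bar b|}r(\bar b,[\bar a,\bar c])$. $(Z(L),L/Z(L),r)$ is the Lie superalgebra of pairs $(x,\bar a)$, $x\in Z(L)$, $\bar a\in L/Z(L)$, graded componentwise, with componentwise addition and bracket $[(x_1,\bar a),(x_2,\bar b)]=(r(\bar a,\bar b),[\bar a,\bar b])$. *)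

theory Defs
  imports Main
begin

text \<open>Lie superalgebras over a field 'k, represented concretely by a carrier set together
with vector space operations, a bracket and a Z2-grading (False = even, True = odd).\<close>

record ('a, 'k) lsa =
  car :: "'a set"
  zer :: 'a
  pls :: "'a \<Rightarrow> 'a \<Rightarrow> 'a"
  sml :: "'k \<Rightarrow> 'a \<Rightarrow> 'a"
  brk :: "'a \<Rightarrow> 'a \<Rightarrow> 'a"
  prt :: "bool \<Rightarrow> 'a set"

definition gsign :: "bool \<Rightarrow> bool \<Rightarrow> 'k::field" where
  "gsign p q = (if p \<and> q then -1 else 1)"

definition is_vspace :: "('a, 'k::field, 'm) lsa_scheme \<Rightarrow> bool" where
  "is_vspace L \<longleftrightarrow>
     zer L \<in> car L \<and>
     (\<forall>x\<in>car L. \<forall>y\<in>car L. pls L x y \<in> car L) \<and>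
     (\<forall>c. \<forall>x\<in>car L. sml L c x \<in> car L) \<and>
     (\<forall>x\<in>car L. \<forall>y\<in>car L. \<forall>z\<in>car L. pls L (pls L x y) z = pls L x (pls L y z)) \<and>
     (\<forall>x\<in>car L. \<forall>y\<in>car L. pls L x y = pls L y x) \<and>
     (\<forall>x\<in>car L. pls L (zer L) x = x) \<and>
     (\<forall>x\<in>car L. pls L x (sml L (-1) x) = zer L) \<and>
     (\<forall>c. \<forall>x\<in>car L. \<forall>y\<in>car L. sml L c (pls L x y) = pls L (sml L c x) (sml L c y)) \<and>
     (\<forall>c d. \<forall>x\<in>car L. sml L (c + d) x = pls L (sml L c x) (sml L d x)) \<and>
     (\<forall>c d. \<forall>x\<in>car L. sml L (c * d) x = sml L c (sml L d x)) \<and>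
     (\<forall>x\<in>car L. sml L 1 x = x)"

definition is_subspace :: "('a, 'k::field, 'm) lsa_scheme \<Rightarrow> 'a set \<Rightarrow> bool" where
  "is_subspace L S \<longleftrightarrow> S \<subseteq> car L \<and> zer L \<in> S \<and>
     (\<forall>x\<in>S. \<forall>y\<in>S. pls L x y \<in> S) \<and> (\<forall>c. \<forall>x\<in>S. sml L c x \<in> S)"

definition lie_superalgebra :: "('a, 'k::field, 'm) lsa_scheme \<Rightarrow> bool" where
  "lie_superalgebra L \<longleftrightarrow>
     is_vspace L \<and>
     (\<forall>p. is_subspace L (prt L p)) \<and>
     prt L False \<inter> prt L True = {zer L} \<and>
     (\<forall>x\<in>car L. \<exists>a\<in>prt L False. \<exists>b\<in>prt L True. x = pls L a b) \<and>
     (\<forall>x\<in>car L. \<forall>y\<in>car L. brk L x y \<in> car L) \<and>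
     (\<forall>x\<in>car L. \<forall>y\<in>car L. \<forall>z\<in>car L. brk L (pls L x y) z = pls L (brk L x z) (brk L y z)) \<and>
     (\<forall>x\<in>car L. \<forall>y\<in>car L. \<forall>z\<in>car L. brk L z (pls L x y) = pls L (brk L z x) (brk L z y)) \<and>
     (\<forall>c. \<forall>x\<in>car L. \<forall>y\<in>car L. brk L (sml L c x) y = sml L c (brk L x y)) \<and>
     (\<forall>c. \<forall>x\<in>car L. \<forall>y\<in>car L. brk L x (sml L c y) = sml L c (brk L x y)) \<and>
     (\<forall>p q. \<forall>a\<in>prt L p. \<forall>b\<in>prt L q. brk L a b \<in> prt L (p \<noteq> q)) \<and>
     (\<forall>p q. \<forall>a\<in>prt L p. \<forall>b\<in>prt L q.
        brk L a b = sml L (- gsign p q) (brk L b a)) \<and>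
     (\<forall>p q r. \<forall>a\<in>prt L p. \<forall>b\<in>prt L q. \<forall>c\<in>prt L r.
        brk L a (brk L b c) = pls L (brk L (brk L a b) c) (sml L (gsign p q) (brk L b (brk L a c))))"

fun lincomb :: "('a, 'k, 'm) lsa_scheme \<Rightarrow> ('k \<times> 'a) list \<Rightarrow> 'a" where
  "lincomb L [] = zer L"
| "lincomb L ((c, v) # xs) = pls L (sml L c v) (lincomb L xs)"

definition fin_dim :: "('a, 'k, 'm) lsa_scheme \<Rightarrow> bool" where
  "fin_dim L \<longleftrightarrow> (\<exists>vs. set vs \<subseteq> car L \<and>
     (\<forall>x\<in>car L. \<exists>cs. length cs = length vs \<and> x = lincomb L (zip cs vs)))"

definition center :: "('a, 'k, 'm) lsa_scheme \<Rightarrow> 'a set" where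
  "center L = {z \<in> car L. \<forall>x\<in>car L. brk L z x = zer L}"

definition derived :: "('a, 'k, 'm) lsa_scheme \<Rightarrow> 'a set" where
  "derived L = {lincomb L xs | xs. \<forall>cv\<in>set xs. \<exists>a\<in>car L. \<exists>b\<in>car L. snd cv = brk L a b}"

definition stem :: "('a, 'k, 'm) lsa_scheme \<Rightarrow> bool" where
  "stem L \<longleftrightarrow> center L \<subseteq> derived L"

definition subalg :: "('a, 'k) lsa \<Rightarrow> 'a set \<Rightarrow> ('a, 'k) lsa" where
  "subalg L S = L\<lparr>car := S, prt := (\<lambda>p. prt L p \<inter> S)\<rparr>"

definition coset :: "('a, 'k) lsa \<Rightarrow> 'a set \<Rightarrow> 'a \<Rightarrow> 'a set" where
  "coset L I x = {pls L x z | z. z \<in> I}"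

definition rep :: "'a set \<Rightarrow> 'a" where
  "rep A = (SOME a. a \<in> A)"

definition quot :: "('a, 'k) lsa \<Rightarrow> 'a set \<Rightarrow> ('a set, 'k) lsa" where
  "quot L I = \<lparr>car = coset L I ` car L,
              zer = coset L I (zer L),
              pls = (\<lambda>A B. coset L I (pls L (rep A) (rep B))),
              sml = (\<lambda>c A. coset L I (sml L c (rep A))),
              brk = (\<lambda>A B. coset L I (brk L (rep A) (rep B))),
              prt = (\<lambda>p. coset L I ` prt L p)\<rparr>"

abbreviation centralquot :: "('a, 'k) lsa \<Rightarrow> ('a set, 'k) lsa" where
  "centralquot L \<equiv> quot L (center L)"

definition is_hom :: "('a, 'k) lsa \<Rightarrow> ('b, 'k) lsa \<Rightarrow> ('a \<Rightarrow> 'b) \<Rightarrow> bool" where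
  "is_hom L M f \<longleftrightarrow>
     f ` car L \<subseteq> car M \<and>
     (\<forall>x\<in>car L. \<forall>y\<in>car L. f (pls L x y) = pls M (f x) (f y)) \<and>
     (\<forall>c. \<forall>x\<in>car L. f (sml L c x) = sml M c (f x)) \<and>
     (\<forall>x\<in>car L. \<forall>y\<in>car L. f (brk L x y) = brk M (f x) (f y)) \<and>
     (\<forall>p. f ` prt L p \<subseteq> prt M p)"

definition is_iso :: "('a, 'k) lsa \<Rightarrow> ('b, 'k) lsa \<Rightarrow> ('a \<Rightarrow> 'b) \<Rightarrow> bool" where
  "is_iso L M f \<longleftrightarrow> is_hom L M f \<and> bij_betw f (car L) (car M)"

definition isomorphic :: "('a, 'k) lsa \<Rightarrow> ('b, 'k) lsa \<Rightarrow> bool" where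
  "isomorphic L M \<longleftrightarrow> (\<exists>f. is_iso L M f)"

definition isoclinic :: "('a, 'k) lsa \<Rightarrow> ('b, 'k) lsa \<Rightarrow> bool" where
  "isoclinic L M \<longleftrightarrow>
     (\<exists>\<phi> \<theta>. is_iso (centralquot L) (centralquot M) \<phi> \<and>
            is_iso (subalg L (derived L)) (subalg M (derived M)) \<theta> \<and>
            (\<forall>l\<in>car L. \<forall>m\<in>car L. \<forall>k\<in>car M. \<forall>r\<in>car M.
               coset M (center M) k = \<phi> (coset L (center L) l) \<longrightarrow>
               coset M (center M) r = \<phi> (coset L (center L) m) \<longrightarrow>
               \<theta> (brk L l m) = brk M k r))"

definition factor_set :: "('a, 'k::field) lsa \<Rightarrow> ('a set \<Rightarrow> 'a set \<Rightarrow> 'a) \<Rightarrow> bool" where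
  "factor_set L r \<longleftrightarrow>
     (let Q = centralquot L in
       (\<forall>A\<in>car Q. \<forall>B\<in>car Q. r A B \<in> center L) \<and>
       (\<forall>A\<in>car Q. \<forall>B\<in>car Q. \<forall>C\<in>car Q. r (pls Q A B) C = pls L (r A C) (r B C)) \<and>
       (\<forall>A\<in>car Q. \<forall>B\<in>car Q. \<forall>C\<in>car Q. r C (pls Q A B) = pls L (r C A) (r C B)) \<and>
       (\<forall>c. \<forall>A\<in>car Q. \<forall>B\<in>car Q. r (sml Q c A) B = sml L c (r A B)) \<and>
       (\<forall>c. \<forall>A\<in>car Q. \<forall>B\<in>car Q. r A (sml Q c B) = sml L c (r A B)) \<and>
       (\<forall>p q. \<forall>A\<in>prt Q p. \<forall>B\<in>prt Q q. r A B \<in> center L \<inter> prt L (p \<noteq> q)) \<and>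
       (\<forall>p q. \<forall>A\<in>prt Q p. \<forall>B\<in>prt Q q. r A B = sml L (- gsign p q) (r B A)) \<and>
       (\<forall>p q s. \<forall>A\<in>prt Q p. \<forall>B\<in>prt Q q. \<forall>C\<in>prt Q s.
          r (brk Q A B) C = pls L (r A (brk Q B C)) (sml L (- gsign p q) (r B (brk Q A C)))))"

definition fs_alg :: "('a, 'k) lsa \<Rightarrow> ('a set \<Rightarrow> 'a set \<Rightarrow> 'a) \<Rightarrow> ('a \<times> 'a set, 'k) lsa" where
  "fs_alg L r =
     (let Q = centralquot L in
      \<lparr>car = center L \<times> car Q,
       zer = (zer L, zer Q),
       pls = (\<lambda>(x1, a) (x2, b). (pls L x1 x2, pls Q a b)),
       sml = (\<lambda>c (x, a). (sml L c x, sml Q c a)),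
       brk = (\<lambda>(x1, a) (x2, b). (r a b, brk Q a b)),
       prt = (\<lambda>p. (center L \<inter> prt L p) \<times> prt Q p)\<rparr>)"

end

theory Submission
  imports Defs
begin

locale vsp =
  fixes V :: "('a, 'k::field, 'm) lsa_scheme"
  assumes vs: "is_vspace V"
begin

lemmas VS = vs[unfolded is_vspace_def]
lemmas zero_cl[simp] = VS[THEN conjunct1]
lemmas add_cl[simp] = VS[THEN conjunct2, THEN conjunct1, rule_format]
lemmas sml_cl[simp] = VS[THEN conjunct2, THEN conjunct2, THEN conjunct1, rule_format]
lemmas add_assoc = VS[THEN conjunct2, THEN conjunct2, THEN conjunct2, THEN conjunct1, rule_format]
lemmas add_comm = VS[THEN conjunct2, THEN conjunct2, THEN conjunct2, THEN conjunct2, THEN conjunct1, rule_format]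
lemmas zero_add[simp] = VS[THEN conjunct2, THEN conjunct2, THEN conjunct2, THEN conjunct2, THEN conjunct2, THEN conjunct1, rule_format]
lemmas add_neg[simp] = VS[THEN conjunct2, THEN conjunct2, THEN conjunct2, THEN conjunct2, THEN conjunct2, THEN conjunct2, THEN conjunct1, rule_format]
lemmas sml_add = VS[THEN conjunct2, THEN conjunct2, THEN conjunct2, THEN conjunct2, THEN conjunct2, THEN conjunct2, THEN conjunct2, THEN conjunct1, rule_format]
lemmas add_sml = VS[THEN conjunct2, THEN conjunct2, THEN conjunct2, THEN conjunct2, THEN conjunct2, THEN conjunct2, THEN conjunct2, THEN conjunct2, THEN conjunct1, rule_format]
lemmas sml_sml0 = VS[THEN conjunct2, THEN conjunct2, THEN conjunct2, THEN conjunct2, THEN conjunct2, THEN conjunct2, THEN conjunct2, THEN conjunct2, THEN conjunct2, THEN conjunct1, rule_format]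
lemmas sml_one[simp] = VS[THEN conjunct2, THEN conjunct2, THEN conjunct2, THEN conjunct2, THEN conjunct2, THEN conjunct2, THEN conjunct2, THEN conjunct2, THEN conjunct2, THEN conjunct2, rule_format]
lemma sml_sml[simp]: "x \<in> car V \<Longrightarrow> sml V c (sml V d x) = sml V (c * d) x"
  by (rule sml_sml0[symmetric])
lemma add_lcomm: "x \<in> car V \<Longrightarrow> y \<in> car V \<Longrightarrow> z \<in> car V \<Longrightarrow> pls V x (pls V y z) = pls V y (pls V x z)"
proof -
  assume a: "x \<in> car V" "y \<in> car V" "z \<in> car V"
  have "pls V x (pls V y z) = pls V (pls V x y) z" using a by (simp add: add_assoc)
  also have "\<dots> = pls V (pls V y x) z" using a add_comm by simp
  finally show ?thesis using a by (simp add: add_assoc)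
qed
lemma add_zero[simp]: "x \<in> car V \<Longrightarrow> pls V x (zer V) = x"
proof -
  assume x: "x \<in> car V"
  have "pls V x (zer V) = pls V (zer V) x" using x by (simp add: add_comm)
  then show ?thesis using x by simp
qed
lemma neg_add[simp]: "x \<in> car V \<Longrightarrow> pls V (sml V (-1) x) x = zer V"
proof -
  assume x: "x \<in> car V"
  have "pls V (sml V (-1) x) x = pls V x (sml V (-1) x)" using x by (simp add: add_comm)
  then show ?thesis using x by simp
qed
lemma add_neg_left[simp]: "x \<in> car V \<Longrightarrow> y \<in> car V \<Longrightarrow> pls V x (pls V (sml V (-1) x) y) = y"
proof -
  assume x: "x \<in> car V" and y: "y \<in> car V"
  have "pls V x (pls V (sml V (-1) x) y) = pls V (pls V x (sml V (-1) x)) y" by (rule add_assoc[symmetric]) (simp_all add: x y)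
  also have "\<dots> = y" using x y by simp
  finally show ?thesis .
qed
lemma neg_add_left[simp]: "x \<in> car V \<Longrightarrow> y \<in> car V \<Longrightarrow> pls V (sml V (-1) x) (pls V x y) = y"
proof -
  assume x: "x \<in> car V" and y: "y \<in> car V"
  have "pls V (sml V (-1) x) (pls V x y) = pls V (pls V (sml V (-1) x) x) y" by (rule add_assoc[symmetric]) (simp_all add: x y)
  also have "\<dots> = y" using x y by simp
  finally show ?thesis .
qed
lemma add_cancel: "x \<in> car V \<Longrightarrow> y \<in> car V \<Longrightarrow> z \<in> car V \<Longrightarrow> pls V x y = pls V x z \<Longrightarrow> y = z"
proof -
  assume x: "x \<in> car V" and y: "y \<in> car V" and z: "z \<in> car V" and e: "pls V x y = pls V x z"
  have "pls V (sml V (-1) x) (pls V x y) = pls V (sml V (-1) x) (pls V x z)" using e by simp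
  then show ?thesis using x y z by simp
qed
lemma add_cancel_iff[simp]: "x \<in> car V \<Longrightarrow> y \<in> car V \<Longrightarrow> z \<in> car V \<Longrightarrow> pls V x y = pls V x z \<longleftrightarrow> y = z"
  using add_cancel by blast
lemma sml_zero[simp]: "sml V c (zer V) = zer V"
proof -
  have "pls V (sml V c (zer V)) (sml V c (zer V)) = pls V (sml V c (zer V)) (zer V)"
    using sml_add[of "zer V" "zer V" c] by simp
  then show ?thesis using add_cancel[of "sml V c (zer V)" "sml V c (zer V)" "zer V"] by simp
qed
lemma zero_sml[simp]: "x \<in> car V \<Longrightarrow> sml V 0 x = zer V"
proof -
  assume x: "x \<in> car V"
  have "pls V (sml V 0 x) (sml V 0 x) = pls V (sml V 0 x) (zer V)"
    using add_sml[OF x, of 0 0] x by simp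
  then show ?thesis using add_cancel[of "sml V 0 x" "sml V 0 x" "zer V"] x by simp
qed
lemma neg_unique: "x \<in> car V \<Longrightarrow> y \<in> car V \<Longrightarrow> pls V x y = zer V \<Longrightarrow> y = sml V (-1) x"
proof -
  assume x: "x \<in> car V" and y: "y \<in> car V" and e: "pls V x y = zer V"
  have "pls V x y = pls V x (sml V (-1) x)" using e x by simp
  then show ?thesis using add_cancel[of x y "sml V (-1) x"] x y by simp
qed
lemma sml_neg_neg[simp]: "x \<in> car V \<Longrightarrow> sml V (-1) (sml V (-1) x) = x" by simp

lemmas add_ac = add_assoc add_comm add_lcomm

end

lemma (in vsp) sub_eq: "a \<in> car V \<Longrightarrow> b \<in> car V \<Longrightarrow> c \<in> car V \<Longrightarrow> d \<in> car V \<Longrightarrow> pls V a b = pls V c d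
  \<Longrightarrow> pls V a (sml V (-1) c) = pls V d (sml V (-1) b)"
proof -
  assume a: "a \<in> car V" and b: "b \<in> car V" and c: "c \<in> car V" and d: "d \<in> car V" and e: "pls V a b = pls V c d"
  have "pls V a (sml V (-1) c) = pls V (pls V a b) (pls V (sml V (-1) b) (sml V (-1) c))" using a b c d by (simp add: add_ac)
  also have "\<dots> = pls V (pls V c d) (pls V (sml V (-1) b) (sml V (-1) c))" using e by simp
  also have "\<dots> = pls V d (pls V c (pls V (sml V (-1) b) (sml V (-1) c)))" using a b c d by (simp add: add_ac)
  also have "\<dots> = pls V d (pls V (sml V (-1) b) (pls V c (sml V (-1) c)))" using a b c d by (simp add: add_lcomm[of c])
  also have "\<dots> = pls V d (sml V (-1) b)" using a b c d by simp
  finally show ?thesis .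
qed

context vsp begin
lemma subsp_car: "is_subspace V S \<Longrightarrow> x \<in> S \<Longrightarrow> x \<in> car V" unfolding is_subspace_def by blast
lemma subsp_zero: "is_subspace V S \<Longrightarrow> zer V \<in> S" unfolding is_subspace_def by blast
lemma subsp_add: "is_subspace V S \<Longrightarrow> x \<in> S \<Longrightarrow> y \<in> S \<Longrightarrow> pls V x y \<in> S" unfolding is_subspace_def by blast
lemma subsp_sml: "is_subspace V S \<Longrightarrow> x \<in> S \<Longrightarrow> sml V c x \<in> S" unfolding is_subspace_def by blast
lemma subsp_diff: "is_subspace V S \<Longrightarrow> x \<in> S \<Longrightarrow> y \<in> S \<Longrightarrow> pls V x (sml V (-1) y) \<in> S"
  by (simp add: subsp_add subsp_sml)
end

locale lsa =
  fixes L :: "('a, 'k::field) lsa"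
  assumes la: "lie_superalgebra L"
begin
lemmas LA = la[unfolded lie_superalgebra_def]
lemmas vsL = LA[THEN conjunct1, rule_format]
sublocale vsp L by (rule vsp.intro, rule vsL)

lemmas prt_sub = LA[THEN conjunct2, THEN conjunct1, rule_format]
lemma prt_car[simp]: "x \<in> prt L p \<Longrightarrow> x \<in> car L" using prt_sub subsp_car by blast
lemma prt_zero[simp]: "zer L \<in> prt L p" using prt_sub subsp_zero by blast
lemma prt_add[simp]: "x \<in> prt L p \<Longrightarrow> y \<in> prt L p \<Longrightarrow> pls L x y \<in> prt L p" using prt_sub subsp_add by blast
lemma prt_sml[simp]: "x \<in> prt L p \<Longrightarrow> sml L c x \<in> prt L p" using prt_sub subsp_sml by blast
lemmas prt_disj = LA[THEN conjunct2, THEN conjunct2, THEN conjunct1, rule_format]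
lemma prt_inter: "x \<in> prt L p \<Longrightarrow> x \<in> prt L q \<Longrightarrow> p \<noteq> q \<Longrightarrow> x = zer L"
  using prt_disj by (cases p; cases q) auto
lemmas decomp = LA[THEN conjunct2, THEN conjunct2, THEN conjunct2, THEN conjunct1, rule_format]
lemmas brk_cl[simp] = LA[THEN conjunct2, THEN conjunct2, THEN conjunct2, THEN conjunct2, THEN conjunct1, rule_format]
lemmas brk_addl = LA[THEN conjunct2, THEN conjunct2, THEN conjunct2, THEN conjunct2, THEN conjunct2, THEN conjunct1, rule_format]
lemmas brk_addr = LA[THEN conjunct2, THEN conjunct2, THEN conjunct2, THEN conjunct2, THEN conjunct2, THEN conjunct2, THEN conjunct1, rule_format]
lemmas brk_smll = LA[THEN conjunct2, THEN conjunct2, THEN conjunct2, THEN conjunct2, THEN conjunct2, THEN conjunct2, THEN conjunct2, THEN conjunct1, rule_format]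
lemmas brk_smlr = LA[THEN conjunct2, THEN conjunct2, THEN conjunct2, THEN conjunct2, THEN conjunct2, THEN conjunct2, THEN conjunct2, THEN conjunct2, THEN conjunct1, rule_format]
lemmas brk_prt = LA[THEN conjunct2, THEN conjunct2, THEN conjunct2, THEN conjunct2, THEN conjunct2, THEN conjunct2, THEN conjunct2, THEN conjunct2, THEN conjunct2, THEN conjunct1, rule_format]
lemmas brk_skew = LA[THEN conjunct2, THEN conjunct2, THEN conjunct2, THEN conjunct2, THEN conjunct2, THEN conjunct2, THEN conjunct2, THEN conjunct2, THEN conjunct2, THEN conjunct2, THEN conjunct1, rule_format]
lemma jacobi: "a \<in> prt L p \<Longrightarrow> b \<in> prt L q \<Longrightarrow> c \<in> prt L r \<Longrightarrow>
   brk L a (brk L b c) = pls L (brk L (brk L a b) c) (sml L (gsign p q) (brk L b (brk L a c)))"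
  using LA[THEN conjunct2, THEN conjunct2, THEN conjunct2, THEN conjunct2, THEN conjunct2, THEN conjunct2, THEN conjunct2, THEN conjunct2, THEN conjunct2, THEN conjunct2, THEN conjunct2] by blast
lemma brk_zerol[simp]: "x \<in> car L \<Longrightarrow> brk L (zer L) x = zer L"
  using brk_smll[of "zer L" x 0] by simp
lemma brk_zeror[simp]: "x \<in> car L \<Longrightarrow> brk L x (zer L) = zer L"
  using brk_smlr[of x "zer L" 0] by simp

lemma split_zero: "a \<in> prt L p \<Longrightarrow> b \<in> prt L q \<Longrightarrow> p \<noteq> q \<Longrightarrow> pls L a b = zer L \<Longrightarrow> a = zer L \<and> b = zer L"
proof -
  assume a: "a \<in> prt L p" and b: "b \<in> prt L q" and pq: "p \<noteq> q" and e: "pls L a b = zer L"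
  have "b = sml L (-1) a" using neg_unique[OF _ _ e] a b by simp
  then have "b \<in> prt L p" using a by simp
  then have "b = zer L" using prt_inter b pq by blast
  then show ?thesis using e a by simp
qed

lemma split_uniq: "a \<in> prt L p \<Longrightarrow> b \<in> prt L q \<Longrightarrow> a' \<in> prt L p \<Longrightarrow> b' \<in> prt L q \<Longrightarrow> p \<noteq> q
  \<Longrightarrow> pls L a b = pls L a' b' \<Longrightarrow> a = a' \<and> b = b'"
proof -
  assume a: "a \<in> prt L p" and b: "b \<in> prt L q" and a': "a' \<in> prt L p" and b': "b' \<in> prt L q"
    and pq: "p \<noteq> q" and e: "pls L a b = pls L a' b'"
  have e2: "pls L a (sml L (-1) a') = pls L b' (sml L (-1) b)" using sub_eq[OF _ _ _ _ e] a b a' b' by simp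
  have "pls L a (sml L (-1) a') \<in> prt L p" using a a' by simp
  moreover have "pls L a (sml L (-1) a') \<in> prt L q" using e2 b b' by simp
  ultimately have u: "pls L a (sml L (-1) a') = zer L" using prt_inter pq by blast
  have "sml L (-1) a' = sml L (-1) a" using neg_unique[of a "sml L (-1) a'"] u a a' by simp
  then have 1: "a = a'" using a a' by (metis prt_car sml_neg_neg)
  have "pls L b' (sml L (-1) b) = zer L" using u e2 by simp
  then have "sml L (-1) b = sml L (-1) b'" using neg_unique[of b' "sml L (-1) b"] b b' by simp
  then have "b = b'" using b b' by (metis prt_car sml_neg_neg)
  with 1 show ?thesis by simp
qed

end

context lsa begin

abbreviation "Z \<equiv> center L"

lemma center_car: "z \<in> Z \<Longrightarrow> z \<in> car L" unfolding center_def by blast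
lemma center_brk: "z \<in> Z \<Longrightarrow> x \<in> car L \<Longrightarrow> brk L z x = zer L" unfolding center_def by blast
lemma center_I: "z \<in> car L \<Longrightarrow> (\<And>x. x \<in> car L \<Longrightarrow> brk L z x = zer L) \<Longrightarrow> z \<in> Z"
  unfolding center_def by blast

lemma center_sub: "is_subspace L Z"
  unfolding is_subspace_def
proof (intro conjI ballI allI)
  show "Z \<subseteq> car L" using center_car by blast
  show "zer L \<in> Z" by (rule center_I) simp_all
  fix x y assume x: "x \<in> Z" and y: "y \<in> Z"
  show "pls L x y \<in> Z"
  proof (rule center_I)
    fix w assume w: "w \<in> car L"
    show "brk L (pls L x y) w = zer L" using brk_addl[of x y w] x y w center_car center_brk by simp
  qed (simp add: x y center_car)
next
  fix c x assume x: "x \<in> Z"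
  show "sml L c x \<in> Z"
  proof (rule center_I)
    fix w assume w: "w \<in> car L"
    show "brk L (sml L c x) w = zer L" using brk_smll[of x w c] x w center_car center_brk by simp
  qed (simp add: x center_car)
qed

lemma center_graded: "z \<in> Z \<Longrightarrow> a \<in> prt L False \<Longrightarrow> b \<in> prt L True \<Longrightarrow> z = pls L a b \<Longrightarrow> a \<in> Z \<and> b \<in> Z"
proof -
  assume z: "z \<in> Z" and a: "a \<in> prt L False" and b: "b \<in> prt L True" and e: "z = pls L a b"
  have h: "brk L a x = zer L \<and> brk L b x = zer L" if x: "x \<in> prt L q" for x q
  proof -
    have "pls L (brk L a x) (brk L b x) = zer L"
      using brk_addl[of a b x] e z x a b center_brk by simp
    moreover have "brk L a x \<in> prt L (False \<noteq> q)" using brk_prt a x by blast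
    moreover have "brk L b x \<in> prt L (True \<noteq> q)" using brk_prt b x by blast
    ultimately show ?thesis using split_zero by blast
  qed
  have "brk L a x = zer L \<and> brk L b x = zer L" if x: "x \<in> car L" for x
  proof -
    obtain x0 x1 where x0: "x0 \<in> prt L False" and x1: "x1 \<in> prt L True" and xe: "x = pls L x0 x1"
      using decomp x by blast
    show ?thesis using h[OF x0] h[OF x1] brk_addr[of x0 x1 a] brk_addr[of x0 x1 b] x0 x1 a b xe by simp
  qed
  then show ?thesis using a b center_I by simp
qed

lemma center_decomp: "z \<in> Z \<Longrightarrow> \<exists>a\<in>prt L False \<inter> Z. \<exists>b\<in>prt L True \<inter> Z. z = pls L a b"
  using decomp[of z] center_car center_graded by blast

lemma center_brk_r: "z \<in> Z \<Longrightarrow> x \<in> car L \<Longrightarrow> brk L x z = zer L"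
proof -
  assume z: "z \<in> Z" and x: "x \<in> car L"
  have h: "brk L u w = zer L" if u: "u \<in> prt L p" and w: "w \<in> prt L q" "w \<in> Z" for u w p q
    using brk_skew[OF u w(1)] center_brk[OF w(2)] u by simp
  have h2: "brk L x w = zer L" if w: "w \<in> prt L q" "w \<in> Z" for w q
  proof -
    obtain x0 x1 where x0: "x0 \<in> prt L False" and x1: "x1 \<in> prt L True" and xe: "x = pls L x0 x1"
      using decomp x by blast
    show ?thesis using h[OF x0 w] h[OF x1 w] brk_addl[of x0 x1 w] x0 x1 w xe by simp
  qed
  obtain a b where a: "a \<in> prt L False" "a \<in> Z" and b: "b \<in> prt L True" "b \<in> Z" and e: "z = pls L a b"
    using center_decomp z by blast
  show ?thesis using h2[OF a] h2[OF b] brk_addr[of a b x] a b x e by simp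
qed

lemma brk_mod: "x \<in> car L \<Longrightarrow> y \<in> car L \<Longrightarrow> z \<in> Z \<Longrightarrow> z' \<in> Z \<Longrightarrow>
  brk L (pls L x z) (pls L y z') = brk L x y"
proof -
  assume x: "x \<in> car L" and y: "y \<in> car L" and z: "z \<in> Z" and z': "z' \<in> Z"
  have zc: "z \<in> car L" "z' \<in> car L" using z z' center_car by auto
  have "brk L (pls L x z) (pls L y z') = pls L (brk L x (pls L y z')) (brk L z (pls L y z'))"
    using brk_addl x zc y by simp
  also have "\<dots> = brk L x (pls L y z')" using center_brk[OF z] x y zc by simp
  also have "\<dots> = pls L (brk L x y) (brk L x z')" using brk_addr x y zc by simp
  also have "\<dots> = brk L x y" using center_brk_r[OF z'] x y by simp
  finally show ?thesis .
qed

end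

context lsa begin

abbreviation "cs \<equiv> coset L (center L)"
abbreviation "Q \<equiv> centralquot L"

lemma Zc: "z \<in> Z \<Longrightarrow> z \<in> car L" by (rule center_car)
lemma Z_add: "z \<in> Z \<Longrightarrow> z' \<in> Z \<Longrightarrow> pls L z z' \<in> Z" using center_sub subsp_add by blast
lemma Z_sml: "z \<in> Z \<Longrightarrow> sml L c z \<in> Z" using center_sub subsp_sml by blast
lemma Z_zero: "zer L \<in> Z" using center_sub subsp_zero by blast

lemma cs_iff: "y \<in> cs x \<longleftrightarrow> (\<exists>z\<in>Z. y = pls L x z)" unfolding coset_def by blast
lemma cs_self: "x \<in> car L \<Longrightarrow> x \<in> cs x" using cs_iff Z_zero by force

lemma eqv_sym: "x \<in> car L \<Longrightarrow> y \<in> car L \<Longrightarrow> z \<in> Z \<Longrightarrow> x = pls L y z \<Longrightarrow> y = pls L x (sml L (-1) z)"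
proof -
  assume x: "x \<in> car L" and y: "y \<in> car L" and z: "z \<in> Z" and e: "x = pls L y z"
  have zc: "z \<in> car L" using z Zc by blast
  have "pls L x (sml L (-1) z) = pls L y (pls L z (sml L (-1) z))" using e y zc by (simp add: add_assoc)
  then show ?thesis using y zc by simp
qed

lemma cs_eq: "x \<in> car L \<Longrightarrow> y \<in> car L \<Longrightarrow> cs x = cs y \<longleftrightarrow> (\<exists>z\<in>Z. x = pls L y z)"
proof
  assume x: "x \<in> car L" and y: "y \<in> car L" and e: "cs x = cs y"
  show "\<exists>z\<in>Z. x = pls L y z" using cs_self[OF x] e cs_iff by blast
next
  assume x: "x \<in> car L" and y: "y \<in> car L" and "\<exists>z\<in>Z. x = pls L y z"
  then obtain z where z: "z \<in> Z" and e: "x = pls L y z" by blast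
  have zc: "z \<in> car L" using z Zc by blast
  have e2: "y = pls L x (sml L (-1) z)" using eqv_sym x y z e by blast
  show "cs x = cs y"
  proof (rule set_eqI)
    fix w
    show "w \<in> cs x \<longleftrightarrow> w \<in> cs y"
    proof
      assume "w \<in> cs x"
      then obtain z1 where z1: "z1 \<in> Z" and w: "w = pls L x z1" using cs_iff by blast
      have "w = pls L y (pls L z z1)" using w e y zc z1 Zc by (simp add: add_assoc)
      then show "w \<in> cs y" using cs_iff z z1 Z_add by blast
    next
      assume "w \<in> cs y"
      then obtain z1 where z1: "z1 \<in> Z" and w: "w = pls L y z1" using cs_iff by blast
      have "w = pls L x (pls L (sml L (-1) z) z1)" using w e2 x zc z1 Zc by (simp add: add_assoc)
      then show "w \<in> cs x" using cs_iff Z_sml z z1 Z_add by blast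
    qed
  qed
qed

lemma rep_cs: "x \<in> car L \<Longrightarrow> \<exists>z\<in>Z. rep (cs x) = pls L x z"
proof -
  assume x: "x \<in> car L"
  have "rep (cs x) \<in> cs x" unfolding rep_def using cs_self[OF x] by (rule someI)
  then show ?thesis using cs_iff by blast
qed

lemma rep_cs_car: "x \<in> car L \<Longrightarrow> rep (cs x) \<in> car L"
  using rep_cs Zc by fastforce

lemma cs_rep: "x \<in> car L \<Longrightarrow> cs (rep (cs x)) = cs x"
  using rep_cs rep_cs_car cs_eq by blast

lemma Q_car: "car Q = cs ` car L" unfolding quot_def by simp
lemma Q_zer: "zer Q = cs (zer L)" unfolding quot_def by simp
lemma Q_prt: "prt Q p = cs ` prt L p" unfolding quot_def by simp

lemma Q_pls: "x \<in> car L \<Longrightarrow> y \<in> car L \<Longrightarrow> pls Q (cs x) (cs y) = cs (pls L x y)"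
proof -
  assume x: "x \<in> car L" and y: "y \<in> car L"
  obtain z where z: "z \<in> Z" and ez: "rep (cs x) = pls L x z" using rep_cs x by blast
  obtain z' where z': "z' \<in> Z" and ez': "rep (cs y) = pls L y z'" using rep_cs y by blast
  have zc: "z \<in> car L" "z' \<in> car L" using z z' Zc by auto
  have "pls L (rep (cs x)) (rep (cs y)) = pls L (pls L x y) (pls L z z')"
    using ez ez' x y zc by (simp add: add_ac)
  then have "cs (pls L (rep (cs x)) (rep (cs y))) = cs (pls L x y)"
    using x y zc rep_cs_car Z_add[OF z z'] by (intro cs_eq[THEN iffD2]) auto
  then show ?thesis unfolding quot_def by simp
qed

lemma Q_sml: "x \<in> car L \<Longrightarrow> sml Q c (cs x) = cs (sml L c x)"
proof -
  assume x: "x \<in> car L"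
  obtain z where z: "z \<in> Z" and ez: "rep (cs x) = pls L x z" using rep_cs x by blast
  have zc: "z \<in> car L" using z Zc by auto
  have "sml L c (rep (cs x)) = pls L (sml L c x) (sml L c z)"
    using ez x zc by (simp add: sml_add)
  then have "cs (sml L c (rep (cs x))) = cs (sml L c x)"
    using x zc rep_cs_car Z_sml[OF z] by (intro cs_eq[THEN iffD2]) auto
  then show ?thesis unfolding quot_def by simp
qed

lemma Q_brk: "x \<in> car L \<Longrightarrow> y \<in> car L \<Longrightarrow> brk Q (cs x) (cs y) = cs (brk L x y)"
proof -
  assume x: "x \<in> car L" and y: "y \<in> car L"
  obtain z where z: "z \<in> Z" and ez: "rep (cs x) = pls L x z" using rep_cs x by blast
  obtain z' where z': "z' \<in> Z" and ez': "rep (cs y) = pls L y z'" using rep_cs y by blast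
  have "brk L (rep (cs x)) (rep (cs y)) = brk L x y" using ez ez' brk_mod x y z z' by simp
  then show ?thesis unfolding quot_def by simp
qed

lemma cs_zero_iff: "x \<in> car L \<Longrightarrow> cs x = cs (zer L) \<longleftrightarrow> x \<in> Z"
  using cs_eq[of x "zer L"] Zc by auto

lemma Q_rep: "X \<in> car Q \<Longrightarrow> rep X \<in> car L \<and> cs (rep X) = X"
  using Q_car rep_cs_car cs_rep by auto

end

fun spanl :: "('a, 'k::field, 'm) lsa_scheme \<Rightarrow> 'a list \<Rightarrow> 'a set" where
  "spanl V [] = {zer V}"
| "spanl V (v # vs) = {pls V (sml V c v) y | c y. y \<in> spanl V vs}"

definition sumsp :: "('a, 'k::field, 'm) lsa_scheme \<Rightarrow> 'a set \<Rightarrow> 'a set \<Rightarrow> 'a set" where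
  "sumsp V A B = {pls V a b | a b. a \<in> A \<and> b \<in> B}"

definition lin :: "('a, 'k::field, 'm) lsa_scheme \<Rightarrow> 'a \<Rightarrow> 'a set" where
  "lin V v = {sml V c v | c. True}"

definition grd :: "('a, 'k::field, 'm) lsa_scheme \<Rightarrow> 'a set \<Rightarrow> bool" where
  "grd V S \<longleftrightarrow> (\<forall>x\<in>S. \<exists>a\<in>S \<inter> prt V False. \<exists>b\<in>S \<inter> prt V True. x = pls V a b)"

context vsp begin

lemma solve_left: "x \<in> car V \<Longrightarrow> y \<in> car V \<Longrightarrow> z \<in> car V \<Longrightarrow> x = pls V y z \<Longrightarrow> y = pls V x (sml V (-1) z)"
proof -
  assume x: "x \<in> car V" and y: "y \<in> car V" and z: "z \<in> car V" and e: "x = pls V y z"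
  have "pls V (pls V y z) (sml V (-1) z) = pls V y (pls V z (sml V (-1) z))" using y z by (simp add: add_assoc)
  then show ?thesis using y z e by simp
qed

lemma spanl_car: "set vs \<subseteq> car V \<Longrightarrow> spanl V vs \<subseteq> car V"
  by (induction vs) auto

lemma lincomb_spanl: "length cs = length vs \<Longrightarrow> set vs \<subseteq> car V \<Longrightarrow> lincomb V (zip cs vs) \<in> spanl V vs"
proof (induction vs arbitrary: cs)
  case Nil then show ?case by simp
next
  case (Cons v vs)
  then obtain c cs' where "cs = c # cs'" by (cases cs) auto
  with Cons show ?case by auto
qed

lemma sumsp_sub: "is_subspace V A \<Longrightarrow> is_subspace V B \<Longrightarrow> is_subspace V (sumsp V A B)"
  unfolding is_subspace_def
proof (intro conjI ballI allI)
  assume A: "A \<subseteq> car V \<and> zer V \<in> A \<and> (\<forall>x\<in>A. \<forall>y\<in>A. pls V x y \<in> A) \<and> (\<forall>c. \<forall>x\<in>A. sml V c x \<in> A)"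
    and B: "B \<subseteq> car V \<and> zer V \<in> B \<and> (\<forall>x\<in>B. \<forall>y\<in>B. pls V x y \<in> B) \<and> (\<forall>c. \<forall>x\<in>B. sml V c x \<in> B)"
  show "sumsp V A B \<subseteq> car V" using A B add_cl unfolding sumsp_def by blast
  show "zer V \<in> sumsp V A B" using A B unfolding sumsp_def by (auto intro!: exI[of _ "zer V"])
  fix x y assume x: "x \<in> sumsp V A B" and y: "y \<in> sumsp V A B"
  obtain a b where ab: "a \<in> A" "b \<in> B" "x = pls V a b" using x unfolding sumsp_def by blast
  obtain a' b' where ab': "a' \<in> A" "b' \<in> B" "y = pls V a' b'" using y unfolding sumsp_def by blast
  have c: "a \<in> car V" "b \<in> car V" "a' \<in> car V" "b' \<in> car V" using ab ab' A B by auto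
  have "pls V x y = pls V (pls V a a') (pls V b b')" using ab ab' c by (simp add: add_ac)
  moreover have "pls V a a' \<in> A" "pls V b b' \<in> B" using ab ab' A B by auto
  ultimately show "pls V x y \<in> sumsp V A B" unfolding sumsp_def by blast
next
  fix c x
  assume A: "A \<subseteq> car V \<and> zer V \<in> A \<and> (\<forall>x\<in>A. \<forall>y\<in>A. pls V x y \<in> A) \<and> (\<forall>c. \<forall>x\<in>A. sml V c x \<in> A)"
    and B: "B \<subseteq> car V \<and> zer V \<in> B \<and> (\<forall>x\<in>B. \<forall>y\<in>B. pls V x y \<in> B) \<and> (\<forall>c. \<forall>x\<in>B. sml V c x \<in> B)"
    and x: "x \<in> sumsp V A B"
  obtain a b where ab: "a \<in> A" "b \<in> B" "x = pls V a b" using x unfolding sumsp_def by blast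
  have cc: "a \<in> car V" "b \<in> car V" using ab A B by auto
  have "sml V c x = pls V (sml V c a) (sml V c b)" using ab cc by (simp add: sml_add)
  moreover have "sml V c a \<in> A" "sml V c b \<in> B" using ab A B by auto
  ultimately show "sml V c x \<in> sumsp V A B" unfolding sumsp_def by blast
qed

lemma lin_sub: "v \<in> car V \<Longrightarrow> is_subspace V (lin V v)"
  unfolding is_subspace_def lin_def
proof (intro conjI ballI allI)
  assume v: "v \<in> car V"
  show "{sml V c v |c. True} \<subseteq> car V" using v by auto
  show "zer V \<in> {sml V c v |c. True}" using v zero_sml[OF v] by (auto intro!: exI[of _ 0])
  fix x y assume "x \<in> {sml V c v |c. True}" "y \<in> {sml V c v |c. True}"
  then obtain c d where "x = sml V c v" "y = sml V d v" by blast
  then have "pls V x y = sml V (c + d) v" using v by (simp add: add_sml)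
  then show "pls V x y \<in> {sml V c v |c. True}" by blast
next
  fix c x assume v: "v \<in> car V" and "x \<in> {sml V c v |c. True}"
  then obtain d where "x = sml V d v" by blast
  then have "sml V c x = sml V (c * d) v" using v by simp
  then show "sml V c x \<in> {sml V c v |c. True}" by blast
qed

lemma lin_mem: "sml V c v \<in> lin V v" unfolding lin_def by blast

lemma spanl_cons_mem: "y \<in> spanl V vs \<Longrightarrow> pls V (sml V c v) y \<in> spanl V (v # vs)" by auto

end

context lsa begin

lemma homogenize: "set vs \<subseteq> car L \<Longrightarrow> \<exists>hs. set hs \<subseteq> prt L False \<union> prt L True \<and> spanl L vs \<subseteq> spanl L hs"
proof (induction vs)
  case Nil
  show ?case by (rule exI[of _ "[]"]) simp
next
  case (Cons v vs)
  then obtain hs where hs: "set hs \<subseteq> prt L False \<union> prt L True" "spanl L vs \<subseteq> spanl L hs" by auto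
  have v: "v \<in> car L" using Cons by simp
  obtain a b where ab: "a \<in> prt L False" "b \<in> prt L True" "v = pls L a b" using decomp v by blast
  have hsc: "set hs \<subseteq> car L" using hs(1) prt_car by blast
  have "spanl L (v # vs) \<subseteq> spanl L (a # b # hs)"
  proof
    fix x assume "x \<in> spanl L (v # vs)"
    then obtain c y where y: "y \<in> spanl L vs" and x: "x = pls L (sml L c v) y" by auto
    have y2: "y \<in> spanl L hs" using y hs by blast
    have yc: "y \<in> car L" using y2 spanl_car hsc by blast
    have "x = pls L (sml L c a) (pls L (sml L c b) y)" using x ab yc by (simp add: sml_add add_assoc)
    then show "x \<in> spanl L (a # b # hs)" using y2 by auto
  qed
  then show ?case using hs ab by (intro exI[of _ "a # b # hs"]) auto
qed

lemma grd_decomp: "grd L S \<Longrightarrow> x \<in> S \<Longrightarrow> \<exists>a\<in>S \<inter> prt L p. \<exists>b\<in>S \<inter> prt L (\<not> p). x = pls L a b"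
proof -
  assume g: "grd L S" and x: "x \<in> S"
  obtain a b where ab: "a \<in> S \<inter> prt L False" "b \<in> S \<inter> prt L True" "x = pls L a b"
    using g x unfolding grd_def by blast
  show ?thesis
  proof (cases p)
    case True
    have "x = pls L b a" using ab add_comm by auto
    then show ?thesis using ab True by auto
  next
    case False
    then show ?thesis using ab by auto
  qed
qed

lemma grd_sum: "is_subspace L A \<Longrightarrow> is_subspace L B \<Longrightarrow> grd L A \<Longrightarrow> grd L B \<Longrightarrow> grd L (sumsp L A B)"
  unfolding grd_def
proof
  fix x
  assume A: "is_subspace L A" and B: "is_subspace L B" and gA: "\<forall>x\<in>A. \<exists>a\<in>A \<inter> prt L False. \<exists>b\<in>A \<inter> prt L True. x = pls L a b"
    and gB: "\<forall>x\<in>B. \<exists>a\<in>B \<inter> prt L False. \<exists>b\<in>B \<inter> prt L True. x = pls L a b" and x: "x \<in> sumsp L A B"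
  obtain a b where ab: "a \<in> A" "b \<in> B" "x = pls L a b" using x unfolding sumsp_def by blast
  obtain a0 a1 where a: "a0 \<in> A \<inter> prt L False" "a1 \<in> A \<inter> prt L True" "a = pls L a0 a1" using gA ab by blast
  obtain b0 b1 where b: "b0 \<in> B \<inter> prt L False" "b1 \<in> B \<inter> prt L True" "b = pls L b0 b1" using gB ab by blast
  have c: "a0 \<in> car L" "a1 \<in> car L" "b0 \<in> car L" "b1 \<in> car L" using a b by auto
  have e: "x = pls L (pls L a0 b0) (pls L a1 b1)" using ab a b c by (simp add: add_ac)
  have "pls L a0 b0 \<in> sumsp L A B \<inter> prt L False" using a b unfolding sumsp_def by auto
  moreover have "pls L a1 b1 \<in> sumsp L A B \<inter> prt L True" using a b unfolding sumsp_def by auto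
  ultimately show "\<exists>a\<in>sumsp L A B \<inter> prt L False. \<exists>b\<in>sumsp L A B \<inter> prt L True. x = pls L a b" using e by blast
qed

lemma grd_lin: "v \<in> prt L p \<Longrightarrow> grd L (lin L v)"
  unfolding grd_def
proof
  fix x assume v: "v \<in> prt L p" and x: "x \<in> lin L v"
  obtain c where c: "x = sml L c v" using x unfolding lin_def by blast
  have z: "zer L \<in> lin L v" using lin_mem[of 0 v] v by simp
  have xp: "x \<in> prt L p" using c v by simp
  have xc: "x \<in> car L" using xp by simp
  show "\<exists>a\<in>lin L v \<inter> prt L False. \<exists>b\<in>lin L v \<inter> prt L True. x = pls L a b"
  proof (cases p)
    case True
    then show ?thesis using z x xp xc by (intro bexI[of _ "zer L"] bexI[of _ x]) auto
  next
    case False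
    then show ?thesis using z x xp xc by (intro bexI[of _ "zer L"] bexI[of _ x]) auto
  qed
qed

lemma grd_zero: "grd L {zer L}" unfolding grd_def by auto

lemma zero_sub: "is_subspace L {zer L}" unfolding is_subspace_def by auto

lemma compl: "set hs \<subseteq> prt L False \<union> prt L True \<Longrightarrow> is_subspace L S \<Longrightarrow> grd L S \<Longrightarrow>
  \<exists>W. is_subspace L W \<and> grd L W \<and> S \<inter> W = {zer L} \<and> (\<forall>x\<in>spanl L hs. \<exists>s\<in>S. \<exists>w\<in>W. x = pls L s w)"
proof (induction hs arbitrary: S)
  case Nil
  have "S \<inter> {zer L} = {zer L}" using Nil subsp_zero by blast
  moreover have "\<forall>x\<in>spanl L []. \<exists>s\<in>S. \<exists>w\<in>{zer L}. x = pls L s w" using Nil subsp_zero by force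
  ultimately show ?case using zero_sub grd_zero by blast
next
  case (Cons v hs)
  have vh: "v \<in> prt L False \<union> prt L True" using Cons by simp
  then obtain p where vp: "v \<in> prt L p" by blast
  have vc: "v \<in> car L" using vp by simp
  have hsc: "set hs \<subseteq> car L" using Cons(2) prt_car by auto
  have Sc: "S \<subseteq> car L" using Cons(3) unfolding is_subspace_def by blast
  show ?case
  proof (cases "v \<in> S")
    case True
    have hsh: "set hs \<subseteq> prt L False \<union> prt L True" using Cons(2) by simp
    obtain W where W: "is_subspace L W" "grd L W" "S \<inter> W = {zer L}" "\<forall>x\<in>spanl L hs. \<exists>s\<in>S. \<exists>w\<in>W. x = pls L s w"
      using Cons.IH[OF hsh Cons(3) Cons(4)] by blast
    have Wc: "W \<subseteq> car L" using W(1) unfolding is_subspace_def by blast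
    have "\<forall>x\<in>spanl L (v # hs). \<exists>s\<in>S. \<exists>w\<in>W. x = pls L s w"
    proof
      fix x assume "x \<in> spanl L (v # hs)"
      then obtain c y where y: "y \<in> spanl L hs" and x: "x = pls L (sml L c v) y" by auto
      obtain s w where sw: "s \<in> S" "w \<in> W" "y = pls L s w" using W(4) y by blast
      have swc: "s \<in> car L" "w \<in> car L" using sw Sc Wc by auto
      have "x = pls L (pls L (sml L c v) s) w" using x sw vc swc by (simp add: add_assoc)
      moreover have "pls L (sml L c v) s \<in> S" using Cons(3) True sw subsp_add subsp_sml by blast
      ultimately show "\<exists>s\<in>S. \<exists>w\<in>W. x = pls L s w" using sw by blast
    qed
    then show ?thesis using W by blast
  next
    case False
    define S' where "S' = sumsp L S (lin L v)"
    have S'sub: "is_subspace L S'" unfolding S'_def using sumsp_sub Cons(3) lin_sub vc by blast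
    have S'grd: "grd L S'" unfolding S'_def using grd_sum Cons(3,4) lin_sub vc grd_lin vp by blast
    obtain W' where W': "is_subspace L W'" "grd L W'" "S' \<inter> W' = {zer L}" "\<forall>x\<in>spanl L hs. \<exists>s\<in>S'. \<exists>w\<in>W'. x = pls L s w"
      using Cons.IH[OF _ S'sub S'grd] Cons(2) by auto
    have W'c: "W' \<subseteq> car L" using W'(1) unfolding is_subspace_def by blast
    define W where "W = sumsp L W' (lin L v)"
    have Wsub: "is_subspace L W" unfolding W_def using sumsp_sub W'(1) lin_sub vc by blast
    have Wgrd: "grd L W" unfolding W_def using grd_sum W'(1,2) lin_sub vc grd_lin vp by blast
    have inter: "S \<inter> W = {zer L}"
    proof
      show "{zer L} \<subseteq> S \<inter> W" using subsp_zero Cons(3) Wsub by blast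
      show "S \<inter> W \<subseteq> {zer L}"
      proof
        fix s assume s: "s \<in> S \<inter> W"
        then obtain w' d where wd: "w' \<in> W'" "s = pls L w' (sml L d v)" unfolding W_def sumsp_def lin_def by blast
        have sc: "s \<in> car L" using s Sc by blast
        have w'c: "w' \<in> car L" using wd W'c by blast
        have dvc: "sml L d v \<in> car L" using vc by simp
        have "w' = pls L s (sml L (-1) (sml L d v))" by (rule solve_left[OF sc w'c dvc wd(2)])
        then have "w' = pls L s (sml L (- d) v)" using vc by simp
        moreover have "sml L (- d) v \<in> lin L v" by (rule lin_mem)
        ultimately have "w' \<in> S'" unfolding S'_def sumsp_def using s by blast
        then have w0: "w' = zer L" using W'(3) wd by blast
        then have sdv: "s = sml L d v" using wd vc by simp
        show "s \<in> {zer L}"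
        proof (cases "d = 0")
          case True then show ?thesis using sdv vc by simp
        next
          case dn: False
          have "sml L (inverse d) s = v" using sdv vc dn by simp
          moreover have "sml L (inverse d) s \<in> S" using s Cons(3) subsp_sml by blast
          ultimately show ?thesis using False by simp
        qed
      qed
    qed
    have cover: "\<forall>x\<in>spanl L (v # hs). \<exists>s\<in>S. \<exists>w\<in>W. x = pls L s w"
    proof
      fix x assume "x \<in> spanl L (v # hs)"
      then obtain c y where y: "y \<in> spanl L hs" and x: "x = pls L (sml L c v) y" by auto
      obtain s' w' where sw: "s' \<in> S'" "w' \<in> W'" "y = pls L s' w'" using W'(4) y by blast
      obtain s d where sd: "s \<in> S" "s' = pls L s (sml L d v)" using sw(1) unfolding S'_def sumsp_def lin_def by blast
      have cc: "s \<in> car L" "w' \<in> car L" using sd sw Sc W'c by auto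
      have "x = pls L s (pls L w' (sml L (c + d) v))" using x sw sd cc vc by (simp add: add_sml add_ac)
      moreover have "pls L w' (sml L (c + d) v) \<in> W" unfolding W_def sumsp_def using sw lin_mem by blast
      ultimately show "\<exists>s\<in>S. \<exists>w\<in>W. x = pls L s w" using sd by blast
    qed
    show ?thesis using Wsub Wgrd inter cover by blast
  qed
qed

end

context lsa begin

lemma Z_grd: "grd L Z" unfolding grd_def using center_decomp by blast

lemma proj_exists:
  assumes fd: "fin_dim L"
  shows "\<exists>P. (\<forall>x\<in>car L. P x \<in> Z) \<and> (\<forall>z\<in>Z. P z = z) \<and>
    (\<forall>x\<in>car L. \<forall>y\<in>car L. P (pls L x y) = pls L (P x) (P y)) \<and>
    (\<forall>c. \<forall>x\<in>car L. P (sml L c x) = sml L c (P x)) \<and> (\<forall>p. \<forall>x\<in>prt L p. P x \<in> prt L p)"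
proof -
  obtain vs where vs: "set vs \<subseteq> car L" "\<forall>x\<in>car L. \<exists>cs. length cs = length vs \<and> x = lincomb L (zip cs vs)"
    using fd unfolding fin_dim_def by blast
  have carspan: "car L \<subseteq> spanl L vs"
  proof
    fix x assume "x \<in> car L"
    then obtain cs where "length cs = length vs" "x = lincomb L (zip cs vs)" using vs(2) by blast
    then show "x \<in> spanl L vs" using lincomb_spanl vs(1) by simp
  qed
  obtain hs where hs: "set hs \<subseteq> prt L False \<union> prt L True" "spanl L vs \<subseteq> spanl L hs"
    using homogenize[OF vs(1)] by blast
  obtain W where W: "is_subspace L W" "grd L W" "Z \<inter> W = {zer L}" "\<forall>x\<in>spanl L hs. \<exists>s\<in>Z. \<exists>w\<in>W. x = pls L s w"
    using compl[OF hs(1) center_sub Z_grd] by blast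
  have cov: "\<forall>x\<in>car L. \<exists>z\<in>Z. \<exists>w\<in>W. x = pls L z w" using W(4) carspan hs(2) by blast
  have Wc: "\<And>w. w \<in> W \<Longrightarrow> w \<in> car L" using W(1) subsp_car by blast
  have uniq: "z = z'" if h: "z \<in> Z" "w \<in> W" "z' \<in> Z" "w' \<in> W" "pls L z w = pls L z' w'" for z w z' w'
  proof -
    have c: "z \<in> car L" "w \<in> car L" "z' \<in> car L" "w' \<in> car L" using h Wc Zc by auto
    have e: "pls L z (sml L (-1) z') = pls L w' (sml L (-1) w)" using sub_eq[OF c(1,2,3,4) h(5)] .
    have "pls L z (sml L (-1) z') \<in> Z" using h center_sub subsp_diff by blast
    moreover have "pls L w' (sml L (-1) w) \<in> W" using h W(1) subsp_diff by blast
    ultimately have "pls L z (sml L (-1) z') \<in> Z \<inter> W" using e by simp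
    then have "pls L z (sml L (-1) z') = zer L" using W(3) by simp
    then have "sml L (-1) z' = sml L (-1) z" using neg_unique[of z "sml L (-1) z'"] c by simp
    then have "sml L (-1) (sml L (-1) z') = sml L (-1) (sml L (-1) z)" by simp
    then show ?thesis using c by simp
  qed
  define P where "P x = (THE z. z \<in> Z \<and> (\<exists>w\<in>W. x = pls L z w))" for x
  have Pchar: "P (pls L z w) = z" if h: "z \<in> Z" "w \<in> W" for z w
    unfolding P_def
  proof (rule the_equality)
    show "z \<in> Z \<and> (\<exists>wa\<in>W. pls L z w = pls L z wa)" using h by blast
    fix z' assume "z' \<in> Z \<and> (\<exists>wa\<in>W. pls L z w = pls L z' wa)"
    then obtain wa where wa: "z' \<in> Z" "wa \<in> W" "pls L z w = pls L z' wa" by blast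
    show "z' = z" using uniq[OF h(1) h(2) wa(1) wa(2) wa(3)] by simp
  qed
  have Pdec: "P x \<in> Z \<and> (\<exists>w\<in>W. x = pls L (P x) w)" if x: "x \<in> car L" for x
  proof -
    obtain z w where zw: "z \<in> Z" "w \<in> W" "x = pls L z w" using cov x by blast
    then have "P x = z" using Pchar by simp
    then show ?thesis using zw by blast
  qed
  have P1: "\<forall>x\<in>car L. P x \<in> Z" using Pdec by blast
  have P2: "\<forall>z\<in>Z. P z = z"
  proof
    fix z assume z: "z \<in> Z"
    have "P (pls L z (zer L)) = z" using Pchar z W(1) subsp_zero by blast
    then show "P z = z" using z Zc by simp
  qed
  have P3: "\<forall>x\<in>car L. \<forall>y\<in>car L. P (pls L x y) = pls L (P x) (P y)"
  proof (intro ballI)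
    fix x y assume x: "x \<in> car L" and y: "y \<in> car L"
    obtain wx where wx: "wx \<in> W" "x = pls L (P x) wx" using Pdec x by blast
    obtain wy where wy: "wy \<in> W" "y = pls L (P y) wy" using Pdec y by blast
    have c: "P x \<in> car L" "P y \<in> car L" "wx \<in> car L" "wy \<in> car L" using Pdec x y wx wy Wc Zc by auto
    have "pls L (pls L (P x) wx) (pls L (P y) wy) = pls L (pls L (P x) (P y)) (pls L wx wy)"
      using c by (simp add: add_ac)
    then have "pls L x y = pls L (pls L (P x) (P y)) (pls L wx wy)"
      by (simp only: wx(2)[symmetric] wy(2)[symmetric])
    moreover have "pls L (P x) (P y) \<in> Z" using Pdec x y Z_add by blast
    moreover have "pls L wx wy \<in> W" using wx wy W(1) subsp_add by blast
    ultimately show "P (pls L x y) = pls L (P x) (P y)" using Pchar by simp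
  qed
  have P4: "\<forall>c. \<forall>x\<in>car L. P (sml L c x) = sml L c (P x)"
  proof (intro allI ballI)
    fix c x assume x: "x \<in> car L"
    obtain wx where wx: "wx \<in> W" "x = pls L (P x) wx" using Pdec x by blast
    have cc: "P x \<in> car L" "wx \<in> car L" using Pdec x wx Wc Zc by auto
    have "sml L c (pls L (P x) wx) = pls L (sml L c (P x)) (sml L c wx)" using cc sml_add by simp
    then have "sml L c x = pls L (sml L c (P x)) (sml L c wx)" by (simp only: wx(2)[symmetric])
    moreover have "sml L c (P x) \<in> Z" using Pdec x Z_sml by blast
    moreover have "sml L c wx \<in> W" using wx W(1) subsp_sml by blast
    ultimately show "P (sml L c x) = sml L c (P x)" using Pchar by simp
  qed
  have P5: "\<forall>p. \<forall>x\<in>prt L p. P x \<in> prt L p"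
  proof (intro allI ballI)
    fix p x assume xp: "x \<in> prt L p"
    have x: "x \<in> car L" using xp by simp
    obtain w where w: "w \<in> W" "x = pls L (P x) w" using Pdec x by blast
    have Pz: "P x \<in> Z" using Pdec x by blast
    obtain z0 z1 where z: "z0 \<in> Z \<inter> prt L p" "z1 \<in> Z \<inter> prt L (\<not> p)" "P x = pls L z0 z1"
      using grd_decomp[OF Z_grd Pz] by blast
    obtain w0 w1 where ww: "w0 \<in> W \<inter> prt L p" "w1 \<in> W \<inter> prt L (\<not> p)" "w = pls L w0 w1"
      using grd_decomp[OF W(2) w(1)] by blast
    have c: "z0 \<in> car L" "z1 \<in> car L" "w0 \<in> car L" "w1 \<in> car L" using z ww by auto
    have xe: "x = pls L (pls L z0 z1) (pls L w0 w1)" using w(2) unfolding z(3) ww(3) .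
    have "pls L (pls L z0 w0) (pls L z1 w1) = pls L (pls L z0 z1) (pls L w0 w1)"
      using c by (simp add: add_ac)
    then have "pls L (pls L z0 w0) (pls L z1 w1) = pls L x (zer L)"
      using xe x by simp
    moreover have "pls L z0 w0 \<in> prt L p" "pls L z1 w1 \<in> prt L (\<not> p)" using z ww by auto
    ultimately have e: "pls L z1 w1 = zer L" using split_uniq[of "pls L z0 w0" p "pls L z1 w1" "\<not> p" x "zer L"] xp by auto
    then have "w1 = sml L (-1) z1" using neg_unique[of z1 w1] c by simp
    then have "w1 \<in> Z" using z Z_sml by simp
    then have "w1 = zer L" using W(3) ww by blast
    then have "z1 = zer L" using e c by simp
    then have "P x = z0" using z c by simp
    then show "P x \<in> prt L p" using z by simp
  qed
  show ?thesis using P1 P2 P3 P4 P5 by blast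
qed

end

context lsa begin

lemma lincomb_car: "(\<forall>cv\<in>set xs. snd cv \<in> car L) \<Longrightarrow> lincomb L xs \<in> car L"
proof (induction xs)
  case Nil then show ?case by simp
next
  case (Cons cv xs)
  obtain c v where cv: "cv = (c, v)" by (cases cv)
  then show ?case using Cons by simp
qed

lemma derived_car: "x \<in> derived L \<Longrightarrow> x \<in> car L"
  unfolding derived_def using lincomb_car brk_cl by fastforce

lemma brk_derived: "a \<in> car L \<Longrightarrow> b \<in> car L \<Longrightarrow> brk L a b \<in> derived L"
proof -
  assume a: "a \<in> car L" and b: "b \<in> car L"
  show ?thesis unfolding derived_def mem_Collect_eq
    by (rule exI[of _ "[(1, brk L a b)]"]) (use a b in auto)
qed

lemma derived_sml_brk: "a \<in> car L \<Longrightarrow> b \<in> car L \<Longrightarrow> sml L c (brk L a b) \<in> derived L"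
proof -
  assume a: "a \<in> car L" and b: "b \<in> car L"
  show ?thesis unfolding derived_def mem_Collect_eq
    by (rule exI[of _ "[(c, brk L a b)]"]) (use a b in auto)
qed

end

locale two = L: lsa L + M: lsa M for L :: "('a, 'k::field) lsa" and M :: "('b, 'k) lsa" +
  fixes \<phi> :: "'a set \<Rightarrow> 'b set" and \<theta> :: "'a \<Rightarrow> 'b"
  assumes phi: "is_iso (centralquot L) (centralquot M) \<phi>"
    and theta: "is_iso (subalg L (derived L)) (subalg M (derived M)) \<theta>"
    and compat: "\<forall>l\<in>car L. \<forall>m\<in>car L. \<forall>k\<in>car M. \<forall>r\<in>car M.
               coset M (center M) k = \<phi> (coset L (center L) l) \<longrightarrow>
               coset M (center M) r = \<phi> (coset L (center L) m) \<longrightarrow>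
               \<theta> (brk L l m) = brk M k r"
    and stemL: "stem L" and stemM: "stem M"
begin

lemma th_car: "x \<in> derived L \<Longrightarrow> \<theta> x \<in> derived M"
  using theta unfolding is_iso_def is_hom_def subalg_def by auto
lemma th_pls: "x \<in> derived L \<Longrightarrow> y \<in> derived L \<Longrightarrow> \<theta> (pls L x y) = pls M (\<theta> x) (\<theta> y)"
  using theta unfolding is_iso_def is_hom_def subalg_def by auto
lemma th_sml: "x \<in> derived L \<Longrightarrow> \<theta> (sml L c x) = sml M c (\<theta> x)"
  using theta unfolding is_iso_def is_hom_def subalg_def by auto
lemma th_prt: "x \<in> derived L \<Longrightarrow> x \<in> prt L p \<Longrightarrow> \<theta> x \<in> prt M p"
  using theta unfolding is_iso_def is_hom_def subalg_def by simp blast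
lemma th_bij: "bij_betw \<theta> (derived L) (derived M)"
  using theta unfolding is_iso_def subalg_def by auto

lemma ph_car: "X \<in> car (centralquot L) \<Longrightarrow> \<phi> X \<in> car (centralquot M)"
  using phi unfolding is_iso_def is_hom_def by auto
lemma ph_pls: "X \<in> car (centralquot L) \<Longrightarrow> Y \<in> car (centralquot L) \<Longrightarrow>
   \<phi> (pls (centralquot L) X Y) = pls (centralquot M) (\<phi> X) (\<phi> Y)"
  using phi unfolding is_iso_def is_hom_def by auto
lemma ph_sml: "X \<in> car (centralquot L) \<Longrightarrow> \<phi> (sml (centralquot L) c X) = sml (centralquot M) c (\<phi> X)"
  using phi unfolding is_iso_def is_hom_def by auto
lemma ph_brk: "X \<in> car (centralquot L) \<Longrightarrow> Y \<in> car (centralquot L) \<Longrightarrow>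
   \<phi> (brk (centralquot L) X Y) = brk (centralquot M) (\<phi> X) (\<phi> Y)"
  using phi unfolding is_iso_def is_hom_def by auto
lemma ph_prt: "X \<in> prt (centralquot L) p \<Longrightarrow> \<phi> X \<in> prt (centralquot M) p"
  using phi unfolding is_iso_def is_hom_def by blast
lemma ph_bij: "bij_betw \<phi> (car (centralquot L)) (car (centralquot M))"
  using phi unfolding is_iso_def by auto

lemma ph_cs: "x \<in> car L \<Longrightarrow> \<exists>y\<in>car M. \<phi> (coset L (center L) x) = coset M (center M) y"
  using ph_car[of "coset L (center L) x"] L.Q_car M.Q_car by auto

lemma ph_zero: "\<phi> (coset L (center L) (zer L)) = coset M (center M) (zer M)"
proof -
  obtain y where y: "y \<in> car M" "\<phi> (coset L (center L) (zer L)) = coset M (center M) y" using ph_cs[OF L.zero_cl] by blast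
  have "coset L (center L) (zer L) = sml (centralquot L) 0 (coset L (center L) (zer L))"
    using L.Q_sml[of "zer L" 0] by simp
  then have "\<phi> (coset L (center L) (zer L)) = sml (centralquot M) 0 (coset M (center M) y)"
    using ph_sml[of "coset L (center L) (zer L)" 0] y L.Q_car by simp
  also have "\<dots> = coset M (center M) (zer M)" using M.Q_sml[of y 0] y by simp
  finally show ?thesis .
qed

lemma th_zero: "\<theta> (zer L) = zer M"
proof -
  have z: "zer L \<in> derived L" using L.brk_derived[of "zer L" "zer L"] by simp
  have "\<theta> (zer L) = \<theta> (sml L 0 (zer L))" by simp
  also have "\<dots> = sml M 0 (\<theta> (zer L))" using th_sml z by blast
  also have "\<dots> = zer M" using th_car[OF z] M.derived_car by simp
  finally show ?thesis .
qed

lemma key: "\<forall>cv\<in>set xs. \<exists>a\<in>car L. \<exists>b\<in>car L. snd cv = brk L a b \<Longrightarrow>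
  lincomb L xs \<in> derived L \<and> \<phi> (coset L (center L) (lincomb L xs)) = coset M (center M) (\<theta> (lincomb L xs))"
proof (induction xs)
  case Nil
  have "zer L \<in> derived L" using L.brk_derived[of "zer L" "zer L"] by simp
  then show ?case using ph_zero th_zero by simp
next
  case (Cons cv xs)
  obtain c v where cv: "cv = (c, v)" by (cases cv)
  obtain a b where ab: "a \<in> car L" "b \<in> car L" "v = brk L a b" using Cons.prems cv by auto
  have IH: "lincomb L xs \<in> derived L" "\<phi> (coset L (center L) (lincomb L xs)) = coset M (center M) (\<theta> (lincomb L xs))"
    using Cons.IH Cons.prems by auto
  define w where "w = lincomb L xs"
  have wc: "w \<in> car L" using IH L.derived_car w_def by blast
  have in_der: "lincomb L (cv # xs) \<in> derived L" unfolding derived_def mem_Collect_eq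
    by (rule exI[of _ "cv # xs"]) (use Cons.prems in simp)
  have vd: "v \<in> derived L" "sml L c v \<in> derived L" using ab L.brk_derived L.derived_sml_brk by auto
  have e1: "lincomb L (cv # xs) = pls L (sml L c v) w" using cv w_def by simp
  obtain k where k: "k \<in> car M" "coset M (center M) k = \<phi> (coset L (center L) a)"
    using ph_cs[OF ab(1)] by force
  obtain r where r: "r \<in> car M" "coset M (center M) r = \<phi> (coset L (center L) b)"
    using ph_cs[OF ab(2)] by force
  have tv: "\<theta> v = brk M k r" unfolding ab(3) using compat[rule_format, OF ab(1) ab(2) k(1) r(1) k(2) r(2)] .
  have tvc: "\<theta> w \<in> car M" using th_car IH(1) M.derived_car w_def by blast
  have "\<theta> (lincomb L (cv # xs)) = pls M (sml M c (brk M k r)) (\<theta> w)"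
    using e1 th_pls[OF vd(2) IH(1)[folded w_def]] th_sml[OF vd(1)] tv by simp
  then have "coset M (center M) (\<theta> (lincomb L (cv # xs))) =
     pls (centralquot M) (sml (centralquot M) c (brk (centralquot M) (coset M (center M) k) (coset M (center M) r))) (coset M (center M) (\<theta> w))"
    using M.Q_pls M.Q_sml M.Q_brk k(1) r(1) tvc by simp
  also have "\<dots> = pls (centralquot M) (sml (centralquot M) c (brk (centralquot M) (\<phi> (coset L (center L) a)) (\<phi> (coset L (center L) b)))) (\<phi> (coset L (center L) w))"
    using k r IH(2) w_def by simp
  also have "\<dots> = \<phi> (pls (centralquot L) (sml (centralquot L) c (brk (centralquot L) (coset L (center L) a) (coset L (center L) b))) (coset L (center L) w))"
  proof -
    have m1: "L.cs a \<in> car L.Q" "L.cs b \<in> car L.Q" "L.cs w \<in> car L.Q" using ab wc L.Q_car by auto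
    have m2: "brk L.Q (L.cs a) (L.cs b) \<in> car L.Q" using ab L.Q_brk L.Q_car by simp
    have m3: "sml L.Q c (brk L.Q (L.cs a) (L.cs b)) \<in> car L.Q" using ab L.Q_brk L.Q_sml L.Q_car by simp
    show ?thesis by (simp only: ph_pls[OF m3 m1(3)] ph_sml[OF m2] ph_brk[OF m1(1) m1(2)])
  qed
  also have "\<dots> = \<phi> (coset L (center L) (lincomb L (cv # xs)))"
  proof -
    have "pls L.Q (sml L.Q c (brk L.Q (L.cs a) (L.cs b))) (L.cs w) = L.cs (pls L (sml L c (brk L a b)) w)"
      using ab(1,2) wc by (simp add: L.Q_brk L.Q_sml L.Q_pls)
    then show ?thesis using e1 ab(3) by simp
  qed
  finally show ?case using in_der by simp
qed

lemma key2: "w \<in> derived L \<Longrightarrow> \<phi> (coset L (center L) w) = coset M (center M) (\<theta> w)"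
proof -
  assume "w \<in> derived L"
  then obtain xs where "w = lincomb L xs" "\<forall>cv\<in>set xs. \<exists>a\<in>car L. \<exists>b\<in>car L. snd cv = brk L a b"
    unfolding derived_def by blast
  then show ?thesis using key by simp
qed

end

context lsa begin
lemma Q_pls_car: "X \<in> car Q \<Longrightarrow> Y \<in> car Q \<Longrightarrow> pls Q X Y \<in> car Q"
  using Q_car Q_pls by auto
lemma Q_sml_car: "X \<in> car Q \<Longrightarrow> sml Q c X \<in> car Q"
  using Q_car Q_sml by auto
lemma Q_brk_car: "X \<in> car Q \<Longrightarrow> Y \<in> car Q \<Longrightarrow> brk Q X Y \<in> car Q"
  using Q_car Q_brk by auto
lemma center_derived: "stem L \<Longrightarrow> z \<in> center L \<Longrightarrow> z \<in> derived L"
  unfolding stem_def by blast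
end

context two begin

lemma theta_Z: "z \<in> center L \<Longrightarrow> \<theta> z \<in> center M"
proof -
  assume z: "z \<in> center L"
  have zd: "z \<in> derived L" using L.center_derived[OF stemL z] .
  have tz: "\<theta> z \<in> car M" using th_car zd M.derived_car by blast
  have "L.cs z = L.cs (zer L)" using L.cs_zero_iff[of z] z L.Zc by simp
  then have "M.cs (\<theta> z) = M.cs (zer M)" using key2[OF zd] ph_zero by simp
  then show ?thesis using M.cs_zero_iff[of "\<theta> z"] tz by simp
qed

definition psi where "psi = inv_into (derived L) \<theta>"

lemma th_inj: "inj_on \<theta> (derived L)" using th_bij bij_betw_imp_inj_on by blast
lemma th_img: "\<theta> ` derived L = derived M" using th_bij bij_betw_imp_surj_on by blast
lemma ph_inj: "inj_on \<phi> (car L.Q)" using ph_bij bij_betw_imp_inj_on by blast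
lemma ph_img: "\<phi> ` car L.Q = car M.Q" using ph_bij bij_betw_imp_surj_on by blast

lemma psi: "z' \<in> center M \<Longrightarrow> psi z' \<in> center L \<and> \<theta> (psi z') = z'"
proof -
  assume z': "z' \<in> center M"
  have zd: "z' \<in> \<theta> ` derived L" using M.center_derived[OF stemM z'] th_img by simp
  have wd: "psi z' \<in> derived L" unfolding psi_def using inv_into_into[OF zd] .
  have tw: "\<theta> (psi z') = z'" unfolding psi_def using f_inv_into_f[OF zd] .
  have wc: "psi z' \<in> car L" using wd L.derived_car by blast
  have "\<phi> (L.cs (psi z')) = M.cs z'" using key2[OF wd] tw by simp
  also have "\<dots> = M.cs (zer M)" using M.cs_zero_iff[of z'] z' M.Zc by simp
  also have "\<dots> = \<phi> (L.cs (zer L))" using ph_zero by simp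
  finally have e: "\<phi> (L.cs (psi z')) = \<phi> (L.cs (zer L))" .
  have m: "L.cs (psi z') \<in> car L.Q" "L.cs (zer L) \<in> car L.Q" using wc L.Q_car by auto
  have "L.cs (psi z') = L.cs (zer L)" by (rule inj_onD[OF ph_inj e m])
  then have "psi z' \<in> center L" using L.cs_zero_iff[of "psi z'"] wc by simp
  then show ?thesis using tw by blast
qed

lemma psi_theta: "z \<in> center L \<Longrightarrow> psi (\<theta> z) = z"
  unfolding psi_def by (rule inv_into_f_f[OF th_inj L.center_derived[OF stemL]])

lemma psi_add: "z1 \<in> center M \<Longrightarrow> z2 \<in> center M \<Longrightarrow> psi (pls M z1 z2) = pls L (psi z1) (psi z2)"
proof -
  assume z1: "z1 \<in> center M" and z2: "z2 \<in> center M"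
  have u: "pls L (psi z1) (psi z2) \<in> center L" using psi z1 z2 L.Z_add by blast
  have d: "psi z1 \<in> derived L" "psi z2 \<in> derived L" using psi z1 z2 L.center_derived[OF stemL] by blast+
  have "\<theta> (pls L (psi z1) (psi z2)) = pls M z1 z2" using th_pls[OF d] psi z1 z2 by simp
  then show ?thesis using psi_theta[OF u] by simp
qed

lemma psi_sml: "z1 \<in> center M \<Longrightarrow> psi (sml M c z1) = sml L c (psi z1)"
proof -
  assume z1: "z1 \<in> center M"
  have u: "sml L c (psi z1) \<in> center L" using psi z1 L.Z_sml by blast
  have d: "psi z1 \<in> derived L" using psi z1 L.center_derived[OF stemL] by blast
  have "\<theta> (sml L c (psi z1)) = sml M c z1" using th_sml[OF d] psi z1 by simp
  then show ?thesis using psi_theta[OF u] by simp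
qed

lemma psi_inj: "z1 \<in> center M \<Longrightarrow> z2 \<in> center M \<Longrightarrow> psi z1 = psi z2 \<Longrightarrow> z1 = z2"
proof -
  assume z: "z1 \<in> center M" "z2 \<in> center M" and e: "psi z1 = psi z2"
  have "z1 = \<theta> (psi z1)" using psi z(1) by simp
  also have "\<dots> = \<theta> (psi z2)" using e by simp
  also have "\<dots> = z2" using psi z(2) by simp
  finally show ?thesis .
qed

lemma psi_prt: "z' \<in> center M \<Longrightarrow> z' \<in> prt M p \<Longrightarrow> psi z' \<in> prt L p"
proof -
  assume z': "z' \<in> center M" and zp: "z' \<in> prt M p"
  have w: "psi z' \<in> center L" "\<theta> (psi z') = z'" using psi z' by auto
  obtain w0 w1 where ww: "w0 \<in> center L \<inter> prt L p" "w1 \<in> center L \<inter> prt L (\<not> p)" "psi z' = pls L w0 w1"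
    using L.grd_decomp[OF L.Z_grd w(1)] by blast
  have d: "w0 \<in> derived L" "w1 \<in> derived L" using ww L.center_derived[OF stemL] by auto
  have "z' = pls M (\<theta> w0) (\<theta> w1)" using w(2) ww(3) th_pls[OF d] by simp
  then have "pls M (\<theta> w0) (\<theta> w1) = pls M z' (zer M)" using zp by simp
  moreover have "\<theta> w0 \<in> prt M p" "\<theta> w1 \<in> prt M (\<not> p)" using th_prt d ww by auto
  ultimately have "\<theta> w1 = zer M" using M.split_uniq[of "\<theta> w0" p "\<theta> w1" "\<not> p" z' "zer M"] zp by auto
  then have "\<theta> w1 = \<theta> (zer L)" using th_zero by simp
  moreover have "zer L \<in> derived L" using L.brk_derived[of "zer L" "zer L"] by simp
  ultimately have "w1 = zer L" using inj_onD[OF th_inj _ d(2)] by blast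
  moreover have "w0 \<in> car L" using ww L.Zc by blast
  ultimately have "psi z' = w0" using ww(3) by simp
  then show ?thesis using ww by simp
qed

end

context lsa begin
lemma car_grd: "grd L (car L)"
  unfolding grd_def using decomp prt_car by blast
lemma decomp_p: "x \<in> car L \<Longrightarrow> \<exists>a\<in>prt L p. \<exists>b\<in>prt L (\<not> p). x = pls L a b"
  using grd_decomp[OF car_grd] by blast
end

context two begin

definition phi' where "phi' = inv_into (car L.Q) \<phi>"

lemma phi'1: "X \<in> car M.Q \<Longrightarrow> phi' X \<in> car L.Q \<and> \<phi> (phi' X) = X"
proof -
  assume "X \<in> car M.Q"
  then have X: "X \<in> \<phi> ` car L.Q" using ph_img by simp
  show ?thesis unfolding phi'_def using inv_into_into[OF X] f_inv_into_f[OF X] by simp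
qed

lemma phi'2: "Y \<in> car L.Q \<Longrightarrow> phi' (\<phi> Y) = Y"
  unfolding phi'_def by (rule inv_into_f_f[OF ph_inj])

lemma phi'_pls: "X \<in> car M.Q \<Longrightarrow> Y \<in> car M.Q \<Longrightarrow> phi' (pls M.Q X Y) = pls L.Q (phi' X) (phi' Y)"
proof -
  assume X: "X \<in> car M.Q" and Y: "Y \<in> car M.Q"
  have u: "pls L.Q (phi' X) (phi' Y) \<in> car L.Q" using L.Q_pls_car phi'1 X Y by blast
  have "\<phi> (pls L.Q (phi' X) (phi' Y)) = pls M.Q X Y" using ph_pls phi'1 X Y by simp
  then show ?thesis using phi'2[OF u] by simp
qed

lemma phi'_sml: "X \<in> car M.Q \<Longrightarrow> phi' (sml M.Q c X) = sml L.Q c (phi' X)"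
proof -
  assume X: "X \<in> car M.Q"
  have u: "sml L.Q c (phi' X) \<in> car L.Q" using L.Q_sml_car phi'1 X by blast
  have "\<phi> (sml L.Q c (phi' X)) = sml M.Q c X" using ph_sml phi'1 X by simp
  then show ?thesis using phi'2[OF u] by simp
qed

lemma phi'_brk: "X \<in> car M.Q \<Longrightarrow> Y \<in> car M.Q \<Longrightarrow> phi' (brk M.Q X Y) = brk L.Q (phi' X) (phi' Y)"
proof -
  assume X: "X \<in> car M.Q" and Y: "Y \<in> car M.Q"
  have u: "brk L.Q (phi' X) (phi' Y) \<in> car L.Q" using L.Q_brk_car phi'1 X Y by blast
  have "\<phi> (brk L.Q (phi' X) (phi' Y)) = brk M.Q X Y" using ph_brk phi'1 X Y by simp
  then show ?thesis using phi'2[OF u] by simp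
qed

lemma phi'_inj: "X \<in> car M.Q \<Longrightarrow> Y \<in> car M.Q \<Longrightarrow> phi' X = phi' Y \<Longrightarrow> X = Y"
proof -
  assume X: "X \<in> car M.Q" and Y: "Y \<in> car M.Q" and e: "phi' X = phi' Y"
  have "X = \<phi> (phi' X)" using phi'1 X by simp
  also have "\<dots> = \<phi> (phi' Y)" using e by simp
  also have "\<dots> = Y" using phi'1 Y by simp
  finally show ?thesis .
qed

lemma phi'_prt: "X \<in> prt M.Q p \<Longrightarrow> phi' X \<in> prt L.Q p"
proof -
  assume Xp: "X \<in> prt M.Q p"
  obtain x where x: "x \<in> prt M p" "X = M.cs x" using Xp M.Q_prt by auto
  have xc: "x \<in> car M" using x by simp
  have X: "X \<in> car M.Q" using x M.Q_car xc by simp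
  obtain y where y: "y \<in> car L" "phi' X = L.cs y" using phi'1[OF X] L.Q_car by auto
  obtain y0 y1 where yy: "y0 \<in> prt L p" "y1 \<in> prt L (\<not> p)" "y = pls L y0 y1" using L.decomp_p y(1) by blast
  have yc: "y0 \<in> car L" "y1 \<in> car L" using yy by auto
  have Y: "phi' X = pls L.Q (L.cs y0) (L.cs y1)" using y yy yc L.Q_pls by simp
  have "\<phi> (L.cs y0) \<in> prt M.Q p" using ph_prt yy(1) L.Q_prt by simp
  then obtain m0 where m0: "m0 \<in> prt M p" "\<phi> (L.cs y0) = M.cs m0" using M.Q_prt by auto
  have "\<phi> (L.cs y1) \<in> prt M.Q (\<not> p)" using ph_prt yy(2) L.Q_prt by simp
  then obtain m1 where m1: "m1 \<in> prt M (\<not> p)" "\<phi> (L.cs y1) = M.cs m1" using M.Q_prt by auto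
  have mc: "m0 \<in> car M" "m1 \<in> car M" using m0 m1 by auto
  have "X = \<phi> (phi' X)" using phi'1 X by simp
  also have "\<dots> = pls M.Q (\<phi> (L.cs y0)) (\<phi> (L.cs y1))" using Y ph_pls yc L.Q_car by simp
  also have "\<dots> = M.cs (pls M m0 m1)" using m0 m1 mc M.Q_pls by simp
  finally have "M.cs x = M.cs (pls M m0 m1)" using x by simp
  then obtain z where z: "z \<in> center M" "x = pls M (pls M m0 m1) z" using M.cs_eq[of x "pls M m0 m1"] xc mc by auto
  obtain z0 z1 where zz: "z0 \<in> center M \<inter> prt M p" "z1 \<in> center M \<inter> prt M (\<not> p)" "z = pls M z0 z1"
    using M.grd_decomp[OF M.Z_grd z(1)] by blast
  have zc: "z0 \<in> car M" "z1 \<in> car M" using zz by auto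
  have e1: "x = pls M (pls M m0 m1) (pls M z0 z1)" using z(2) zz(3) by simp
  have "pls M (pls M m0 z0) (pls M m1 z1) = pls M (pls M m0 m1) (pls M z0 z1)"
    using mc zc by (simp add: M.add_ac)
  then have "pls M (pls M m0 z0) (pls M m1 z1) = pls M x (zer M)" using e1 xc by simp
  moreover have "pls M m0 z0 \<in> prt M p" "pls M m1 z1 \<in> prt M (\<not> p)" using m0 m1 zz by auto
  ultimately have e2: "pls M m1 z1 = zer M"
    using M.split_uniq[of "pls M m0 z0" p "pls M m1 z1" "\<not> p" x "zer M"] x by auto
  have "pls M z1 m1 = zer M" using e2 mc zc M.add_comm by simp
  then have "m1 = sml M (-1) z1" using M.neg_unique[of z1 m1] mc zc by simp
  then have "m1 \<in> center M" using zz M.Z_sml by simp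
  then have "M.cs m1 = M.cs (zer M)" using M.cs_zero_iff[of m1] mc by simp
  then have "\<phi> (L.cs y1) = \<phi> (L.cs (zer L))" using m1 ph_zero by simp
  moreover have "L.cs y1 \<in> car L.Q" "L.cs (zer L) \<in> car L.Q" using yc L.Q_car by auto
  ultimately have "L.cs y1 = L.cs (zer L)" using inj_onD[OF ph_inj] by blast
  then have "phi' X = L.cs y0" using Y L.Q_pls yc by simp
  then show ?thesis using L.Q_prt yy by simp
qed

end

lemma fs_car: "car (fs_alg L r) = center L \<times> car (centralquot L)" by (simp add: fs_alg_def Let_def)
lemma fs_pls: "pls (fs_alg L r) (x1, a) (x2, b) = (pls L x1 x2, pls (centralquot L) a b)" by (simp add: fs_alg_def Let_def)
lemma fs_sml: "sml (fs_alg L r) c (x, a) = (sml L c x, sml (centralquot L) c a)" by (simp add: fs_alg_def Let_def)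
lemma fs_brk: "brk (fs_alg L r) (x1, a) (x2, b) = (r a b, brk (centralquot L) a b)" by (simp add: fs_alg_def Let_def)
lemma fs_prt: "prt (fs_alg L r) p = (center L \<inter> prt L p) \<times> prt (centralquot L) p" by (simp add: fs_alg_def Let_def)

context lsa begin
lemma Q_prt_car: "A \<in> prt Q p \<Longrightarrow> A \<in> car Q" using Q_prt Q_car by auto
lemma cs_prt: "x \<in> prt L p \<Longrightarrow> cs x \<in> prt Q p" using Q_prt by simp
lemma cs_car: "x \<in> car L \<Longrightarrow> cs x \<in> car Q" using Q_car by simp
end

context two begin

lemma main:
  assumes fd: "fin_dim M"
  shows "\<exists>r. factor_set L r \<and> isomorphic M (fs_alg L r)"
proof -
  obtain P where P1: "\<forall>x\<in>car M. P x \<in> center M" and P2: "\<forall>z\<in>center M. P z = z"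
    and P3: "\<forall>x\<in>car M. \<forall>y\<in>car M. P (pls M x y) = pls M (P x) (P y)"
    and P4: "\<forall>c. \<forall>x\<in>car M. P (sml M c x) = sml M c (P x)" and P5: "\<forall>p. \<forall>x\<in>prt M p. P x \<in> prt M p"
    using M.proj_exists[OF fd] by blast
  define \<beta> where "\<beta> a b = psi (P (brk M a b))" for a b
  define \<rho> where "\<rho> A = rep (\<phi> A)" for A
  define r where "r A B = \<beta> (\<rho> A) (\<rho> B)" for A B
  define F where "F m = (psi (P m), phi' (M.cs m))" for m
  have PS1: "psi (P (pls M x y)) = pls L (psi (P x)) (psi (P y))" if "x \<in> car M" "y \<in> car M" for x y
    using that P1 P3 psi_add by simp
  have PS2: "psi (P (sml M c x)) = sml L c (psi (P x))" if "x \<in> car M" for x c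
    using that P1 P4 psi_sml by simp
  have PZ: "psi (P x) \<in> center L" if "x \<in> car M" for x using that P1 psi by blast
  have rho: "\<rho> A \<in> car M \<and> M.cs (\<rho> A) = \<phi> A" if "A \<in> car L.Q" for A
    using M.Q_rep[OF ph_car[OF that]] unfolding \<rho>_def by blast
  have beta_cong: "\<beta> a b = \<beta> a' b'" if h: "a \<in> car M" "a' \<in> car M" "b \<in> car M" "b' \<in> car M"
      "M.cs a = M.cs a'" "M.cs b = M.cs b'" for a a' b b'
  proof -
    obtain z where z: "z \<in> center M" "a = pls M a' z" using M.cs_eq[of a a'] h by auto
    obtain z' where z': "z' \<in> center M" "b = pls M b' z'" using M.cs_eq[of b b'] h by auto
    have "brk M a b = brk M a' b'" using z(2) z'(2) M.brk_mod h z(1) z'(1) by simp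
    then show ?thesis unfolding \<beta>_def by simp
  qed
  have rho_pls: "M.cs (\<rho> (pls L.Q A B)) = M.cs (pls M (\<rho> A) (\<rho> B))" if "A \<in> car L.Q" "B \<in> car L.Q" for A B
  proof -
    have "M.cs (\<rho> (pls L.Q A B)) = \<phi> (pls L.Q A B)" using rho L.Q_pls_car that by blast
    also have "\<dots> = pls M.Q (M.cs (\<rho> A)) (M.cs (\<rho> B))" using ph_pls that rho by simp
    also have "\<dots> = M.cs (pls M (\<rho> A) (\<rho> B))" by (rule M.Q_pls) (use rho[OF that(1)] rho[OF that(2)] in auto)
    finally show ?thesis .
  qed
  have rho_sml: "M.cs (\<rho> (sml L.Q c A)) = M.cs (sml M c (\<rho> A))" if "A \<in> car L.Q" for A c
  proof -
    have "M.cs (\<rho> (sml L.Q c A)) = \<phi> (sml L.Q c A)" using rho L.Q_sml_car that by blast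
    also have "\<dots> = sml M.Q c (M.cs (\<rho> A))" using ph_sml that rho by simp
    also have "\<dots> = M.cs (sml M c (\<rho> A))" by (rule M.Q_sml) (use rho[OF that] in auto)
    finally show ?thesis .
  qed
  have rho_brk: "M.cs (\<rho> (brk L.Q A B)) = M.cs (brk M (\<rho> A) (\<rho> B))" if "A \<in> car L.Q" "B \<in> car L.Q" for A B
  proof -
    have "M.cs (\<rho> (brk L.Q A B)) = \<phi> (brk L.Q A B)" using rho L.Q_brk_car that by blast
    also have "\<dots> = brk M.Q (M.cs (\<rho> A)) (M.cs (\<rho> B))" using ph_brk that rho by simp
    also have "\<dots> = M.cs (brk M (\<rho> A) (\<rho> B))" by (rule M.Q_brk) (use rho[OF that(1)] rho[OF that(2)] in auto)
    finally show ?thesis .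
  qed
  have homrep: "\<exists>a\<in>prt M p. M.cs (\<rho> A) = M.cs a" if "A \<in> prt L.Q p" for A p
  proof -
    have "\<phi> A \<in> prt M.Q p" using ph_prt that by blast
    then obtain a where a: "a \<in> prt M p" "\<phi> A = M.cs a" using M.Q_prt by auto
    then show ?thesis using rho L.Q_prt_car that by auto
  qed
  have csbrk: "M.cs (brk M x y) = M.cs (brk M x' y')" if h: "x \<in> car M" "x' \<in> car M" "y \<in> car M" "y' \<in> car M"
      "M.cs x = M.cs x'" "M.cs y = M.cs y'" for x x' y y'
    using M.Q_brk[of x y] M.Q_brk[of x' y'] h by simp
  have rcar: "\<rho> A \<in> car M" if "A \<in> car L.Q" for A using rho that by blast
  have h1: "\<forall>A\<in>car L.Q. \<forall>B\<in>car L.Q. r A B \<in> center L"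
    unfolding r_def \<beta>_def using PZ rcar M.brk_cl by simp
  have h2: "\<forall>A\<in>car L.Q. \<forall>B\<in>car L.Q. \<forall>C\<in>car L.Q. r (pls L.Q A B) C = pls L (r A C) (r B C)"
  proof (intro ballI)
    fix A B C assume A: "A \<in> car L.Q" and B: "B \<in> car L.Q" and C: "C \<in> car L.Q"
    have "r (pls L.Q A B) C = \<beta> (pls M (\<rho> A) (\<rho> B)) (\<rho> C)" unfolding r_def
      by (rule beta_cong) (use rho_pls[OF A B] rcar A B C L.Q_pls_car in auto)
    also have "\<dots> = pls L (r A C) (r B C)" unfolding r_def \<beta>_def
      using rcar A B C M.brk_addl PS1 by simp
    finally show "r (pls L.Q A B) C = pls L (r A C) (r B C)" .
  qed
  have h3: "\<forall>A\<in>car L.Q. \<forall>B\<in>car L.Q. \<forall>C\<in>car L.Q. r C (pls L.Q A B) = pls L (r C A) (r C B)"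
  proof (intro ballI)
    fix A B C assume A: "A \<in> car L.Q" and B: "B \<in> car L.Q" and C: "C \<in> car L.Q"
    have "r C (pls L.Q A B) = \<beta> (\<rho> C) (pls M (\<rho> A) (\<rho> B))" unfolding r_def
      by (rule beta_cong) (use rho_pls[OF A B] rcar A B C L.Q_pls_car in auto)
    also have "\<dots> = pls L (r C A) (r C B)" unfolding r_def \<beta>_def
      using rcar A B C M.brk_addr PS1 by simp
    finally show "r C (pls L.Q A B) = pls L (r C A) (r C B)" .
  qed
  have h4: "\<forall>c. \<forall>A\<in>car L.Q. \<forall>B\<in>car L.Q. r (sml L.Q c A) B = sml L c (r A B)"
  proof (intro ballI allI)
    fix c A B assume A: "A \<in> car L.Q" and B: "B \<in> car L.Q"
    have "r (sml L.Q c A) B = \<beta> (sml M c (\<rho> A)) (\<rho> B)" unfolding r_def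
      by (rule beta_cong) (use rho_sml[OF A] rcar A B L.Q_sml_car in auto)
    also have "\<dots> = sml L c (r A B)" unfolding r_def \<beta>_def
      using rcar A B M.brk_smll PS2 by simp
    finally show "r (sml L.Q c A) B = sml L c (r A B)" .
  qed
  have h5: "\<forall>c. \<forall>A\<in>car L.Q. \<forall>B\<in>car L.Q. r A (sml L.Q c B) = sml L c (r A B)"
  proof (intro ballI allI)
    fix c A B assume A: "A \<in> car L.Q" and B: "B \<in> car L.Q"
    have "r A (sml L.Q c B) = \<beta> (\<rho> A) (sml M c (\<rho> B))" unfolding r_def
      by (rule beta_cong) (use rho_sml[OF B] rcar A B L.Q_sml_car in auto)
    also have "\<dots> = sml L c (r A B)" unfolding r_def \<beta>_def
      using rcar A B M.brk_smlr PS2 by simp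
    finally show "r A (sml L.Q c B) = sml L c (r A B)" .
  qed
  have hr: "r A B = \<beta> a b" if h: "A \<in> car L.Q" "B \<in> car L.Q" "a \<in> car M" "b \<in> car M"
     "M.cs (\<rho> A) = M.cs a" "M.cs (\<rho> B) = M.cs b" for A B a b
    unfolding r_def by (rule beta_cong) (use h rcar in auto)
  have h6: "\<forall>p q. \<forall>A\<in>prt L.Q p. \<forall>B\<in>prt L.Q q. r A B \<in> center L \<inter> prt L (p \<noteq> q)"
  proof (intro ballI allI)
    fix p q A B assume A: "A \<in> prt L.Q p" and B: "B \<in> prt L.Q q"
    obtain a where a: "a \<in> prt M p" "M.cs (\<rho> A) = M.cs a" using homrep A by blast
    obtain b where b: "b \<in> prt M q" "M.cs (\<rho> B) = M.cs b" using homrep B by blast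
    have e: "r A B = \<beta> a b" using hr[of A B a b] a b A B L.Q_prt_car by simp
    have ab: "brk M a b \<in> prt M (p \<noteq> q)" using M.brk_prt a b by blast
    have abc: "brk M a b \<in> car M" using ab by simp
    have "P (brk M a b) \<in> center M \<inter> prt M (p \<noteq> q)" using P1 P5 ab abc by blast
    then have "\<beta> a b \<in> center L \<inter> prt L (p \<noteq> q)" unfolding \<beta>_def using psi psi_prt by blast
    then show "r A B \<in> center L \<inter> prt L (p \<noteq> q)" using e by simp
  qed
  have h7: "\<forall>p q. \<forall>A\<in>prt L.Q p. \<forall>B\<in>prt L.Q q. r A B = sml L (- gsign p q) (r B A)"
  proof (intro ballI allI)
    fix p q A B assume A: "A \<in> prt L.Q p" and B: "B \<in> prt L.Q q"
    obtain a where a: "a \<in> prt M p" "M.cs (\<rho> A) = M.cs a" using homrep A by blast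
    obtain b where b: "b \<in> prt M q" "M.cs (\<rho> B) = M.cs b" using homrep B by blast
    have e: "r A B = \<beta> a b" using hr[of A B a b] a b A B L.Q_prt_car by simp
    have e2: "r B A = \<beta> b a" using hr[of B A b a] a b A B L.Q_prt_car by simp
    have "\<beta> a b = psi (P (sml M (- gsign p q) (brk M b a)))" unfolding \<beta>_def by (simp only: M.brk_skew[OF a(1) b(1)])
    also have "\<dots> = sml L (- gsign p q) (\<beta> b a)" unfolding \<beta>_def using PS2 a b by simp
    finally show "r A B = sml L (- gsign p q) (r B A)" using e e2 by simp
  qed
  have h8: "\<forall>p q s. \<forall>A\<in>prt L.Q p. \<forall>B\<in>prt L.Q q. \<forall>C\<in>prt L.Q s.
          r (brk L.Q A B) C = pls L (r A (brk L.Q B C)) (sml L (- gsign p q) (r B (brk L.Q A C)))"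
  proof (intro ballI allI)
    fix p q s A B C assume A: "A \<in> prt L.Q p" and B: "B \<in> prt L.Q q" and C: "C \<in> prt L.Q s"
    have Ac: "A \<in> car L.Q" and Bc: "B \<in> car L.Q" and Cc: "C \<in> car L.Q" using A B C L.Q_prt_car by auto
    obtain a where a: "a \<in> prt M p" "M.cs (\<rho> A) = M.cs a" using homrep A by blast
    obtain b where b: "b \<in> prt M q" "M.cs (\<rho> B) = M.cs b" using homrep B by blast
    obtain c where c: "c \<in> prt M s" "M.cs (\<rho> C) = M.cs c" using homrep C by blast
    have ac: "a \<in> car M" "b \<in> car M" "c \<in> car M" using a b c by auto
    have cAB: "M.cs (\<rho> (brk L.Q A B)) = M.cs (brk M a b)"
      using rho_brk[OF Ac Bc] csbrk[of "\<rho> A" a "\<rho> B" b] rcar Ac Bc ac a b by simp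
    have cBC: "M.cs (\<rho> (brk L.Q B C)) = M.cs (brk M b c)"
      using rho_brk[OF Bc Cc] csbrk[of "\<rho> B" b "\<rho> C" c] rcar Bc Cc ac b c by simp
    have cAC: "M.cs (\<rho> (brk L.Q A C)) = M.cs (brk M a c)"
      using rho_brk[OF Ac Cc] csbrk[of "\<rho> A" a "\<rho> C" c] rcar Ac Cc ac a c by simp
    have e1: "r (brk L.Q A B) C = \<beta> (brk M a b) c"
      using hr[of "brk L.Q A B" C "brk M a b" c] cAB c Cc Ac Bc L.Q_brk_car ac by simp
    have e2: "r A (brk L.Q B C) = \<beta> a (brk M b c)"
      using hr[of A "brk L.Q B C" a "brk M b c"] cBC a Cc Ac Bc L.Q_brk_car ac by simp
    have e3: "r B (brk L.Q A C) = \<beta> b (brk M a c)"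
      using hr[of B "brk L.Q A C" b "brk M a c"] cAC b Cc Ac Bc L.Q_brk_car ac by simp
    have J: "brk M a (brk M b c) = pls M (brk M (brk M a b) c) (sml M (gsign p q) (brk M b (brk M a c)))"
      using M.jacobi[OF a(1) b(1) c(1)] .
    have J2: "brk M (brk M a b) c = pls M (brk M a (brk M b c)) (sml M (-1) (sml M (gsign p q) (brk M b (brk M a c))))"
      by (rule M.solve_left[OF _ _ _ J]) (use ac in simp_all)
    have J3: "brk M (brk M a b) c = pls M (brk M a (brk M b c)) (sml M (- gsign p q) (brk M b (brk M a c)))"
      using J2 ac by simp
    have "\<beta> (brk M a b) c = pls L (\<beta> a (brk M b c)) (sml L (- gsign p q) (\<beta> b (brk M a c)))"
      unfolding \<beta>_def J3 using PS1 PS2 ac by simp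
    then show "r (brk L.Q A B) C = pls L (r A (brk L.Q B C)) (sml L (- gsign p q) (r B (brk L.Q A C)))"
      using e1 e2 e3 by simp
  qed
  have fs: "factor_set L r"
    unfolding factor_set_def Let_def by (intro conjI h1 h2 h3 h4 h5 h6 h7 h8)
  have csc: "M.cs x \<in> car M.Q" if "x \<in> car M" for x using M.cs_car that by blast
  have F1: "F ` car M \<subseteq> car (fs_alg L r)"
    unfolding fs_car F_def using PZ phi'1 csc by auto
  have F2: "\<forall>x\<in>car M. \<forall>y\<in>car M. F (pls M x y) = pls (fs_alg L r) (F x) (F y)"
  proof (intro ballI)
    fix x y assume x: "x \<in> car M" and y: "y \<in> car M"
    have "M.cs (pls M x y) = pls M.Q (M.cs x) (M.cs y)" using M.Q_pls x y by simp
    then have "phi' (M.cs (pls M x y)) = pls L.Q (phi' (M.cs x)) (phi' (M.cs y))"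
      using phi'_pls csc x y by simp
    then show "F (pls M x y) = pls (fs_alg L r) (F x) (F y)" unfolding F_def fs_pls using PS1 x y by simp
  qed
  have F3: "\<forall>c. \<forall>x\<in>car M. F (sml M c x) = sml (fs_alg L r) c (F x)"
  proof (intro ballI allI)
    fix c x assume x: "x \<in> car M"
    have "M.cs (sml M c x) = sml M.Q c (M.cs x)" using M.Q_sml x by simp
    then have "phi' (M.cs (sml M c x)) = sml L.Q c (phi' (M.cs x))"
      using phi'_sml csc x by simp
    then show "F (sml M c x) = sml (fs_alg L r) c (F x)" unfolding F_def fs_sml using PS2 x by simp
  qed
  have F4: "\<forall>x\<in>car M. \<forall>y\<in>car M. F (brk M x y) = brk (fs_alg L r) (F x) (F y)"
  proof (intro ballI)
    fix x y assume x: "x \<in> car M" and y: "y \<in> car M"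
    have "M.cs (brk M x y) = brk M.Q (M.cs x) (M.cs y)" using M.Q_brk x y by simp
    then have e1: "phi' (M.cs (brk M x y)) = brk L.Q (phi' (M.cs x)) (phi' (M.cs y))"
      using phi'_brk csc x y by simp
    have px: "phi' (M.cs x) \<in> car L.Q" "\<phi> (phi' (M.cs x)) = M.cs x" using phi'1 csc x by auto
    have py: "phi' (M.cs y) \<in> car L.Q" "\<phi> (phi' (M.cs y)) = M.cs y" using phi'1 csc y by auto
    have e2: "r (phi' (M.cs x)) (phi' (M.cs y)) = \<beta> x y" unfolding r_def
      by (rule beta_cong) (use rho[OF px(1)] rho[OF py(1)] px py x y in auto)
    show "F (brk M x y) = brk (fs_alg L r) (F x) (F y)" unfolding F_def fs_brk using e1 e2 unfolding \<beta>_def by simp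
  qed
  have F5: "\<forall>p. F ` prt M p \<subseteq> prt (fs_alg L r) p"
  proof (intro allI subsetI)
    fix p u assume "u \<in> F ` prt M p"
    then obtain m where m: "m \<in> prt M p" "u = F m" by blast
    have mc: "m \<in> car M" using m by simp
    have Pm: "P m \<in> center M" "P m \<in> prt M p" using P1 P5 m mc by auto
    have "psi (P m) \<in> center L \<inter> prt L p" using psi[OF Pm(1)] psi_prt[OF Pm] by blast
    moreover have "phi' (M.cs m) \<in> prt L.Q p" using phi'_prt M.cs_prt m by blast
    ultimately show "u \<in> prt (fs_alg L r) p" unfolding fs_prt m(2) F_def by simp
  qed
  have hom: "is_hom M (fs_alg L r) F" unfolding is_hom_def by (intro conjI F1 F2 F3 F4 F5)
  have inj: "inj_on F (car M)"
  proof (rule inj_onI)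
    fix x y assume x: "x \<in> car M" and y: "y \<in> car M" and e: "F x = F y"
    have a: "psi (P x) = psi (P y)" and b: "phi' (M.cs x) = phi' (M.cs y)" using e unfolding F_def by simp_all
    have "M.cs x = M.cs y" using phi'_inj[OF csc[OF x] csc[OF y] b] .
    then obtain z where z: "z \<in> center M" "x = pls M y z" using M.cs_eq[of x y] x y by auto
    have zc: "z \<in> car M" using z M.Zc by blast
    have "P x = P y" using psi_inj[OF _ _ a] P1 x y by blast
    moreover have "P x = pls M (P y) z" using z P3 P2 y zc by simp
    ultimately have "pls M (P y) z = pls M (P y) (zer M)" using P1 y M.Zc by simp
    then have "z = zer M" using M.add_cancel[of "P y" z "zer M"] P1 y M.Zc zc by simp
    then show "x = y" using z y by simp
  qed
  have surj: "F ` car M = car (fs_alg L r)"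
  proof
    show "F ` car M \<subseteq> car (fs_alg L r)" by (rule F1)
    show "car (fs_alg L r) \<subseteq> F ` car M"
    proof
      fix u assume "u \<in> car (fs_alg L r)"
      then obtain w A where u: "u = (w, A)" "w \<in> center L" "A \<in> car L.Q" unfolding fs_car by blast
      define a where "a = \<rho> A"
      have ac: "a \<in> car M" "M.cs a = \<phi> A" using rho[OF u(3)] unfolding a_def by auto
      have pa: "P a \<in> center M" using P1 ac by blast
      have pac: "P a \<in> car M" using pa M.Zc by blast
      have t: "\<theta> w \<in> center M" using theta_Z u(2) by blast
      have tc: "\<theta> w \<in> car M" using t M.Zc by blast
      define m where "m = pls M (pls M a (sml M (-1) (P a))) (\<theta> w)"
      have mc: "m \<in> car M" unfolding m_def using ac pac tc by simp
      have "P m = pls M (pls M (P a) (sml M (-1) (P (P a)))) (P (\<theta> w))"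
        unfolding m_def using P3 P4 ac pac tc by simp
      also have "\<dots> = \<theta> w" using P2 pa t pac tc by simp
      finally have Pm: "P m = \<theta> w" .
      have "psi (P m) = w" using Pm psi_theta u(2) by simp
      moreover have "m = pls M a (pls M (sml M (-1) (P a)) (\<theta> w))" unfolding m_def using ac pac tc M.add_assoc by simp
      moreover have "pls M (sml M (-1) (P a)) (\<theta> w) \<in> center M" using pa t M.Z_sml M.Z_add by blast
      ultimately have "M.cs m = M.cs a" "psi (P m) = w" using M.cs_eq[of m a] mc ac by auto
      then have "F m = (w, A)" unfolding F_def using ac phi'2 u(3) by simp
      then have "u = F m" using u(1) by simp
      then show "u \<in> F ` car M" using mc by (rule image_eqI)
    qed
  qed
  have "isomorphic M (fs_alg L r)" unfolding isomorphic_def is_iso_def bij_betw_def using hom inj surj by blast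
  then show ?thesis using fs by blast
qed

end

theorem lemma3p3:
  fixes L :: "('a, 'k::field) lsa" and M :: "('b, 'k) lsa"
  assumes "(2::'k) \<noteq> 0" and "(3::'k) \<noteq> 0"
    and "lie_superalgebra L" and "lie_superalgebra M"
    and "fin_dim L" and "fin_dim M"
    and "stem L" and "stem M"
    and "isoclinic L M"
  shows "\<exists>r. factor_set L r \<and> isomorphic M (fs_alg L r)"
proof -
  obtain \<phi> \<theta> where h1: "is_iso (centralquot L) (centralquot M) \<phi>"
    and h2: "is_iso (subalg L (derived L)) (subalg M (derived M)) \<theta>"
    and h3: "\<forall>l\<in>car L. \<forall>m\<in>car L. \<forall>k\<in>car M. \<forall>r\<in>car M.
               coset M (center M) k = \<phi> (coset L (center L) l) \<longrightarrow>
               coset M (center M) r = \<phi> (coset L (center L) m) \<longrightarrow>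
               \<theta> (brk L l m) = brk M k r"
    using assms(9) unfolding isoclinic_def by (elim exE conjE) (rule that; assumption)
  have T: "two L M \<phi> \<theta>" unfolding two_def two_axioms_def lsa_def
    using assms(3,4,7,8) h1 h2 h3 by (intro conjI)
  show ?thesis by (rule two.main[OF T assms(6)])
qed

end
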